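(* Let $f$ be a pseudoperiodic meromorphic function. Then $f$ can be uniquely expressed either as a simply pseudoperiodic function with respect to $\tau_1\mathbb{Z}$, $\tau_1\in\mathbb{C}^*$, $$f(z)=az+\varphi(z),$$ with pseudoperiod $\eta_{\tau_1}=a\tau_1$, where $a\in\mathbb{C}$ and $\varphi$ is simply periodic of period $\tau_1$; or as a doubly pseudoperiodic function with respect to $\Lambda=\tau_1\mathbb{Z}+\tau_2\mathbb{Z}$, $\tau_2/\tau_1\in\mathbb{H}^+$, $$f(z)=az+b\zeta(z)+E(z),$$ with pseudoperiods $\eta_{\tau_1}=a\tau_1+2b\zeta(\tau_1/2)$ and $\eta_{\tau_2}=a\tau_2+2b\zeta(\tau_2/2)$, where $a,b\in\mathbb{C}$, $\zeta$ is the Weierstrass $\zeta$-function with respect to $\Lambda$, and $E$ is doubly periodic with periods $\tau_1,\tau_2$.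
   Context: A meromorphic $f:\mathbb{C}\to\widehat{\mathbb{C}}$ is pseudoperiodic with respect to a lattice $\Lambda$ (of the form $\tau_1\mathbb{Z}$ or $\tau_1\mathbb{Z}+\tau_2\mathbb{Z}$) if for each $\tau\in\Lambda$ there is $\eta_\tau\in\mathbb{C}$ (a pseudoperiod) with $f(z+\tau)=f(z)+\eta_\tau$ for all $z$. It is simply (resp. doubly) pseudoperiodic if all its pseudoperiods are of the form $m\eta_{\tau_1}$ (resp. $m\eta_{\tau_1}+n\eta_{\tau_2}$), $m,n\in\mathbb{Z}$, for some $\tau_1,\tau_2\in\mathbb{C}^*$ with $\operatorname{Im}(\tau_2/\tau_1)>0$. $\mathbb{H}^+=\{\operatorname{Im}z>0\}$. The Weierstrass $\zeta$-function is $\zeta(z)=\frac1z+\sum_{\omega\in\Lambda\setminus\{0\}}(\frac1{z-\omega}+\frac1\omega+\frac{z}{\omega^2})$. *)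

theory Defs
  imports "HOL-Complex_Analysis.Complex_Analysis"
begin

text \<open>Meromorphic functions are represented as total functions complex to complex that are
  meromorphic on the whole plane; their values at the (discrete) singular set are
  irrelevant, so all functional identities are required to hold outside a discrete
  set, i.e. eventually with respect to the filter cosparse UNIV.\<close>

definition lattice1 :: "complex \<Rightarrow> complex set" where
  "lattice1 t1 = {of_int m * t1 | m. True}"

definition lattice2 :: "complex \<Rightarrow> complex \<Rightarrow> complex set" where
  "lattice2 t1 t2 = {of_int m * t1 + of_int n * t2 | m n. True}"

definition pseudoperiodic_wrt :: "(complex \<Rightarrow> complex) \<Rightarrow> complex set \<Rightarrow> bool" where
  "pseudoperiodic_wrt f L \<longleftrightarrow>
     (\<forall>t\<in>L. \<exists>eta. \<forall>\<^sub>\<approx>z. f (z + t) = f z + eta)"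

definition has_period :: "(complex \<Rightarrow> complex) \<Rightarrow> complex \<Rightarrow> bool" where
  "has_period g t \<longleftrightarrow> (\<forall>\<^sub>\<approx>z. g (z + t) = g z)"

definition weierstrass_zeta :: "complex \<Rightarrow> complex \<Rightarrow> complex \<Rightarrow> complex" where
  "weierstrass_zeta t1 t2 z =
     1 / z + (\<Sum>\<^sub>\<infinity>w\<in>lattice2 t1 t2 - {0}. 1 / (z - w) + 1 / w + z / w ^ 2)"

end

theory Submission
  imports Defs
begin


locale lat =
  fixes t1 t2 :: complex
  assumes im_pos: "Im (t2 / t1) > 0"
begin

lemma t1_nz: "t1 \<noteq> 0" using im_pos by auto

definition cc :: real where "cc = norm t1 * (Im (t2/t1) / (Im (t2/t1) + 1 + \<bar>Re (t2/t1)\<bar>))"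

lemma cc_pos: "cc > 0" using im_pos t1_nz unfolding cc_def
  by (intro mult_pos_pos divide_pos_pos) auto

lemma norm_lower:
  fixes x y :: real
  shows "norm (of_real x * t1 + of_real y * t2) \<ge> cc * (\<bar>x\<bar> + \<bar>y\<bar>)"
proof -
  define u where "u = t2 / t1"
  define k where "k = Im u"
  define a where "a = \<bar>Re u\<bar>"
  have k: "k > 0" using im_pos by (simp add: k_def u_def)
  have eq: "of_real x * t1 + of_real y * t2 = t1 * (of_real x + of_real y * u)"
    using t1_nz by (simp add: u_def field_simps)
  define N where "N = norm (of_real x + of_real y * u :: complex)"
  have N1: "N \<ge> \<bar>y\<bar> * k"
  proof -
    have "N \<ge> \<bar>Im (of_real x + of_real y * u)\<bar>" unfolding N_def by (rule abs_Im_le_cmod)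
    thus ?thesis using k by (simp add: k_def abs_mult)
  qed
  have N2: "N \<ge> \<bar>x\<bar> - \<bar>y\<bar> * a"
  proof -
    have "N \<ge> \<bar>Re (of_real x + of_real y * u)\<bar>" unfolding N_def by (rule abs_Re_le_cmod)
    moreover have "\<bar>Re (of_real x + of_real y * u)\<bar> \<ge> \<bar>x\<bar> - \<bar>y\<bar> * a"
    proof -
      have "\<bar>x\<bar> = \<bar>(x + y * Re u) - y * Re u\<bar>" by simp
      also have "\<dots> \<le> \<bar>x + y * Re u\<bar> + \<bar>y * Re u\<bar>" by (rule abs_triangle_ineq4)
      finally show ?thesis by (simp add: a_def abs_mult)
    qed
    ultimately show ?thesis by linarith
  qed
  have a: "a \<ge> 0" by (simp add: a_def)
  have "(k + 1 + a) * N \<ge> k * (\<bar>x\<bar> + \<bar>y\<bar>)"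
  proof -
    have "(1 + a) * N \<ge> (1 + a) * (\<bar>y\<bar> * k)" using N1 a by (intro mult_left_mono) auto
    moreover have "k * N \<ge> k * (\<bar>x\<bar> - \<bar>y\<bar> * a)" using N2 k by (intro mult_left_mono) auto
    ultimately show ?thesis by (simp add: algebra_simps)
  qed
  hence "N \<ge> k / (k + 1 + a) * (\<bar>x\<bar> + \<bar>y\<bar>)"
    using k a by (simp add: field_simps)
  hence "norm t1 * N \<ge> norm t1 * (k / (k + 1 + a) * (\<bar>x\<bar> + \<bar>y\<bar>))"
    by (intro mult_left_mono) auto
  moreover have "norm (of_real x * t1 + of_real y * t2) = norm t1 * N"
    by (simp only: eq norm_mult N_def)
  moreover have "cc * (\<bar>x\<bar> + \<bar>y\<bar>) = norm t1 * (k / (k + 1 + a) * (\<bar>x\<bar> + \<bar>y\<bar>))"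
    by (simp add: cc_def k_def a_def u_def mult.assoc)
  ultimately show ?thesis by simp
qed

lemma indep:
  fixes x y :: real
  assumes "of_real x * t1 + of_real y * t2 = 0"
  shows "x = 0 \<and> y = 0"
proof -
  have "cc * (\<bar>x\<bar> + \<bar>y\<bar>) \<le> 0" using norm_lower[of x y] assms by simp
  with cc_pos have "\<bar>x\<bar> + \<bar>y\<bar> \<le> 0" by (simp add: mult_le_0_iff)
  thus ?thesis by auto
qed

lemma indep_eq:
  fixes x y x' y' :: real
  assumes "of_real x * t1 + of_real y * t2 = of_real x' * t1 + of_real y' * t2"
  shows "x = x' \<and> y = y'"
proof -
  have "of_real (x - x') * t1 + of_real (y - y') * t2 = 0"
    using assms by (simp add: algebra_simps)
  from indep[OF this] show ?thesis by simp
qed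

end


lemma g_summable_nat: "summable (\<lambda>n::nat. (real n + 1) powr (-3/2))"
proof -
  have "summable (\<lambda>n::nat. real n powr (-3/2))" by (subst summable_real_powr_iff) auto
  hence "summable (\<lambda>n::nat. real (Suc n) powr (-3/2))" by (subst summable_Suc_iff)
  thus ?thesis by (simp add: add.commute)
qed

lemma g_summable_int: "(\<lambda>m::int. (real_of_int \<bar>m\<bar> + 1) powr (-3/2)) summable_on UNIV"
proof -
  let ?g = "\<lambda>m::int. (real_of_int \<bar>m\<bar> + 1) powr (-3/2)"
  have s1: "(\<lambda>n::nat. (real n + 1) powr (-3/2)) summable_on UNIV"
    by (rule norm_summable_imp_summable_on) (use g_summable_nat in simp)
  have "summable (\<lambda>n::nat. (real (Suc n) + 1) powr (-3/2))"
    using g_summable_nat by (subst summable_Suc_iff)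
  hence s2: "(\<lambda>n::nat. (real (Suc n) + 1) powr (-3/2)) summable_on UNIV"
    by (intro norm_summable_imp_summable_on) simp
  have A: "?g summable_on (int ` UNIV)"
    by (subst summable_on_reindex) (use s1 in \<open>auto simp: o_def\<close>)
  have B: "?g summable_on ((\<lambda>n. - int (Suc n)) ` UNIV)"
    by (subst summable_on_reindex) (use s2 in \<open>auto simp: o_def inj_on_def\<close>)
  have U: "(UNIV :: int set) = int ` UNIV \<union> (\<lambda>n. - int (Suc n)) ` UNIV"
  proof (rule set_eqI)
    fix x :: int
    show "x \<in> UNIV \<longleftrightarrow> x \<in> int ` UNIV \<union> (\<lambda>n. - int (Suc n)) ` UNIV"
    proof (cases "x \<ge> 0")
      case True
      hence "x \<in> int ` UNIV" by (metis nonneg_int_cases rangeI)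
      thus ?thesis by simp
    next
      case False
      hence "x \<in> (\<lambda>n. - int (Suc n)) ` UNIV" by (auto simp: image_iff intro!: exI[of _ "nat (- x - 1)"])
      thus ?thesis by simp
    qed
  qed
  show ?thesis
    by (subst U, rule summable_on_Un_disjoint[OF A B]) auto
qed

context lat begin

definition Lam :: "complex set" where "Lam = lattice2 t1 t2"

definition lp :: "int \<times> int \<Rightarrow> complex" where
  "lp = (\<lambda>(m, n). of_int m * t1 + of_int n * t2)"

lemma Lam_range: "Lam = range lp"
  unfolding Lam_def lattice2_def lp_def by auto

lemma lp_lower: "norm (lp (m, n)) \<ge> cc * (real_of_int \<bar>m\<bar> + real_of_int \<bar>n\<bar>)"
  using norm_lower[of "of_int m" "of_int n"] by (simp add: lp_def)

lemma inj_lp: "inj lp"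
proof (rule injI)
  fix a b assume "lp a = lp b"
  then obtain m n m' n' where a: "a = (m, n)" and b: "b = (m', n')"
    and e: "of_real (of_int m) * t1 + of_real (of_int n) * t2 =
            of_real (of_int m') * t1 + of_real (of_int n') * t2"
    by (cases a, cases b) (auto simp: lp_def)
  from indep_eq[OF e] show "a = b" using a b by simp
qed

lemma lp_zero_iff: "lp x = 0 \<longleftrightarrow> x = (0, 0)"
proof -
  have "lp (0,0) = 0" by (simp add: lp_def)
  thus ?thesis using inj_lp by (metis injD)
qed

lemma Lam_0 [simp]: "0 \<in> Lam"
  unfolding Lam_range by (metis lp_zero_iff rangeI)

lemma Lam_t1 [simp]: "t1 \<in> Lam"
proof -
  have "t1 = lp (1, 0)" by (simp add: lp_def)
  thus ?thesis unfolding Lam_range by simp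
qed

lemma Lam_t2 [simp]: "t2 \<in> Lam"
proof -
  have "t2 = lp (0, 1)" by (simp add: lp_def)
  thus ?thesis unfolding Lam_range by simp
qed

lemma lp_add: "lp (m, n) + lp (m', n') = lp (m + m', n + n')"
  by (simp add: lp_def algebra_simps)

lemma lp_uminus: "- lp (m, n) = lp (- m, - n)"
  by (simp add: lp_def algebra_simps)

lemma Lam_add: "w \<in> Lam \<Longrightarrow> v \<in> Lam \<Longrightarrow> w + v \<in> Lam"
  unfolding Lam_range by (auto simp: lp_add)

lemma Lam_uminus: "w \<in> Lam \<Longrightarrow> - w \<in> Lam"
  unfolding Lam_range by (auto simp: lp_uminus)

lemma Lam_diff: "w \<in> Lam \<Longrightarrow> v \<in> Lam \<Longrightarrow> w - v \<in> Lam"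
  using Lam_add[OF _ Lam_uminus] by (metis diff_conv_add_uminus)

lemma Lam_shift: "t \<in> Lam \<Longrightarrow> z + t \<in> Lam \<longleftrightarrow> z \<in> Lam"
  by (metis Lam_add Lam_diff add_diff_cancel)

lemma Lam_uminus_iff: "- w \<in> Lam \<longleftrightarrow> w \<in> Lam"
  using Lam_uminus by fastforce

lemma half_notin: "t1 / 2 \<notin> Lam" "t2 / 2 \<notin> Lam"
proof -
  show "t1 / 2 \<notin> Lam"
  proof
    assume "t1 / 2 \<in> Lam"
    then obtain m n where "t1 / 2 = of_int m * t1 + of_int n * t2" unfolding Lam_def lattice2_def by auto
    hence "of_real (1/2) * t1 + of_real 0 * t2 = of_real (of_int m) * t1 + of_real (of_int n) * t2"
      by simp
    from indep_eq[OF this] have "(1/2::real) = of_int m" by simp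
    hence "real_of_int (2 * m) = real_of_int 1" by simp
    hence "2 * m = 1" by (simp only: of_int_eq_iff)
    thus False by presburger
  qed
  show "t2 / 2 \<notin> Lam"
  proof
    assume "t2 / 2 \<in> Lam"
    then obtain m n where "t2 / 2 = of_int m * t1 + of_int n * t2" unfolding Lam_def lattice2_def by auto
    hence "of_real 0 * t1 + of_real (1/2) * t2 = of_real (of_int m) * t1 + of_real (of_int n) * t2"
      by simp
    from indep_eq[OF this] have "(1/2::real) = of_int n" by simp
    hence "real_of_int (2 * n) = real_of_int 1" by simp
    hence "2 * n = 1" by (simp only: of_int_eq_iff)
    thus False by presburger
  qed
qed

lemma finite_Lam_cball: "finite (Lam \<inter> cball 0 R)"
proof -
  define N where "N = ceiling (R / cc)"
  have "Lam \<inter> cball 0 R \<subseteq> lp ` ({-N..N} \<times> {-N..N})"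
  proof
    fix w assume w: "w \<in> Lam \<inter> cball 0 R"
    then obtain m n where wmn: "w = lp (m, n)" unfolding Lam_range by auto
    have "cc * (real_of_int \<bar>m\<bar> + real_of_int \<bar>n\<bar>) \<le> R"
      using lp_lower[of m n] w wmn by auto
    hence "real_of_int \<bar>m\<bar> + real_of_int \<bar>n\<bar> \<le> R / cc" using cc_pos by (simp add: field_simps)
    hence "\<bar>m\<bar> \<le> N" "\<bar>n\<bar> \<le> N" unfolding N_def by linarith+
    hence "(m, n) \<in> {-N..N} \<times> {-N..N}" by auto
    thus "w \<in> lp ` ({-N..N} \<times> {-N..N})" using wmn by blast
  qed
  thus ?thesis by (rule finite_subset) auto
qed

lemma Lam_avoid: "\<exists>r>0. \<forall>w\<in>Lam. w \<noteq> z \<longrightarrow> r \<le> dist z w"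
proof -
  have "finite (Lam \<inter> cball 0 (norm z + 1))" by (rule finite_Lam_cball)
  from finite_set_avoid[OF this, of z] obtain d where d: "d > 0"
    "\<forall>x\<in>Lam \<inter> cball 0 (norm z + 1). x \<noteq> z \<longrightarrow> d \<le> dist z x" by auto
  show ?thesis
  proof (intro exI[of _ "min d 1"] conjI ballI impI)
    fix w assume w: "w \<in> Lam" "w \<noteq> z"
    show "min d 1 \<le> dist z w"
    proof (cases "norm w \<le> norm z + 1")
      case True thus ?thesis using d w by auto
    next
      case False
      hence "dist z w \<ge> 1" using norm_triangle_ineq2[of w z] by (simp add: dist_norm norm_minus_commute)
      thus ?thesis by simp
    qed
  qed (use d in auto)
qed

lemma Lam_not_limpt: "\<not> z islimpt Lam"
  using Lam_avoid[of z] unfolding islimpt_approachable by (metis dist_commute not_less)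

lemma Lam_sparse: "Lam sparse_in UNIV"
  by (subst sparse_in_open) (auto simp: Lam_not_limpt)

lemma Lam_closed: "closed Lam"
  using Lam_sparse by (rule sparse_in_UNIV_imp_closed)

lemma Lam_countable: "countable Lam"
  unfolding Lam_range by simp

lemma ev_notin_Lam: "\<forall>\<^sub>\<approx>z. z \<notin> Lam"
  using Lam_sparse by (rule eventually_not_in_cosparse)

lemma cball_avoid: assumes "z \<notin> Lam" shows "\<exists>r>0. cball z r \<inter> Lam = {}"
proof -
  obtain r where r: "r > 0" "\<forall>w\<in>Lam. w \<noteq> z \<longrightarrow> r \<le> dist z w" using Lam_avoid by blast
  show ?thesis
    by (rule exI[of _ "r/2"]) (use r assms in \<open>fastforce simp: mem_cball\<close>)
qed

lemma Lam0_eq: "Lam - {0} = lp ` (UNIV - {(0,0)})"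
  unfolding Lam_range using lp_zero_iff by auto

lemma sum3: "(\<lambda>w. 1 / norm w ^ 3) summable_on (Lam - {0})"
proof -
  let ?g = "\<lambda>m::int. (real_of_int \<bar>m\<bar> + 1) powr (-3/2)"
  define S where "S = infsum ?g UNIV"
  have gpos: "?g m \<ge> 0" for m by simp
  have Spos: "S \<ge> 0" unfolding S_def by (rule infsum_nonneg) simp
  have gsum: "sum ?g A \<le> S" if "finite A" for A
    unfolding S_def by (rule finite_sum_le_infsum[OF g_summable_int that]) auto
  have bound: "1 / norm (lp (m, n)) ^ 3 \<le> 8 / cc ^ 3 * (?g m * ?g n)" if "(m, n) \<noteq> (0, 0)" for m n
  proof -
    define s where "s = real_of_int \<bar>m\<bar> + real_of_int \<bar>n\<bar>"
    have s1: "s \<ge> 1" using that unfolding s_def by (cases "m = 0") auto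
    define P where "P = (real_of_int \<bar>m\<bar> + 1) * (real_of_int \<bar>n\<bar> + 1)"
    have P1: "P \<ge> 1" unfolding P_def
      using mult_mono[of 1 "real_of_int \<bar>m\<bar> + 1" 1 "real_of_int \<bar>n\<bar> + 1"] by simp
    have "P \<le> (2 * s) * (2 * s)" unfolding P_def
      by (rule mult_mono) (use s1 in \<open>auto simp: s_def\<close>)
    hence "P powr (3/2) \<le> ((2 * s) ^ 2) powr (3/2)"
      using P1 by (intro powr_mono2) (auto simp: power2_eq_square)
    also have "((2 * s) ^ 2) powr (3/2) = ((2 * s) powr 2) powr (3/2)"
      using s1 by (subst powr_numeral) auto
    also have "\<dots> = (2 * s) powr 3" by (simp only: powr_powr) simp
    also have "\<dots> = (2 * s) ^ 3" using s1 by (subst powr_numeral) auto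
    also have "\<dots> = 8 * s ^ 3" by (simp add: power_mult_distrib)
    finally have Pb: "P powr (3/2) \<le> 8 * s ^ 3" .
    have gg1: "?g m * ?g n = P powr (-3/2)" unfolding P_def by (simp only: powr_mult)
    have m32: "(-3/2::real) = -(3/2)" by simp
    have gg: "?g m * ?g n = 1 / P powr (3/2)"
    proof -
      have "?g m * ?g n = P powr (-(3/2))" using gg1 by (simp only: m32)
      also have "\<dots> = 1 / P powr (3/2)" by (rule powr_minus_divide)
      finally show ?thesis .
    qed
    have low: "norm (lp (m, n)) \<ge> cc * s" unfolding s_def by (rule lp_lower)
    have ccs: "cc * s > 0" using cc_pos s1 by simp
    have "1 / norm (lp (m, n)) ^ 3 \<le> 1 / (cc * s) ^ 3"
    proof (rule frac_le)
      show "(cc * s) ^ 3 \<le> norm (lp (m, n)) ^ 3" by (rule power_mono) (use low ccs in auto)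
      show "0 < (cc * s) ^ 3" using ccs by (rule zero_less_power)
    qed auto
    also have "\<dots> = 8 / cc ^ 3 * (1 / (8 * s ^ 3))" using cc_pos s1 by (simp add: power_mult_distrib)
    also have "\<dots> \<le> 8 / cc ^ 3 * (1 / P powr (3/2))"
      using Pb P1 cc_pos s1 by (intro mult_left_mono divide_left_mono mult_pos_pos) auto
    finally show ?thesis using gg by simp
  qed
  have "(\<lambda>mn. 1 / norm (lp mn) ^ 3) summable_on (UNIV - {(0,0)})"
  proof (rule nonneg_bdd_above_summable_on)
    show "bdd_above (sum (\<lambda>mn. 1 / norm (lp mn) ^ 3) ` {F. F \<subseteq> UNIV - {(0, 0)} \<and> finite F})"
    proof (rule bdd_aboveI2)
      fix F :: "(int \<times> int) set" assume F: "F \<in> {F. F \<subseteq> UNIV - {(0, 0)} \<and> finite F}"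
      have "sum (\<lambda>mn. 1 / norm (lp mn) ^ 3) F \<le> sum (\<lambda>(m,n). 8 / cc ^ 3 * (?g m * ?g n)) F"
        by (rule sum_mono) (use F bound in auto)
      also have "\<dots> \<le> sum (\<lambda>(m,n). 8 / cc ^ 3 * (?g m * ?g n)) (fst ` F \<times> snd ` F)"
        by (rule sum_mono2) (use F cc_pos in \<open>auto intro!: finite_cartesian_product simp: subset_fst_snd\<close>)
      also have "\<dots> = 8 / cc ^ 3 * (sum ?g (fst ` F) * sum ?g (snd ` F))"
      proof -
        have "sum ?g (fst ` F) * sum ?g (snd ` F) = (\<Sum>(m,n)\<in>fst ` F \<times> snd ` F. ?g m * ?g n)"
          by (simp only: sum_product sum.cartesian_product)
        thus ?thesis by (simp add: sum_distrib_left case_prod_unfold)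
      qed
      also have "\<dots> \<le> 8 / cc ^ 3 * (S * S)"
        using F cc_pos Spos by (intro mult_left_mono mult_mono gsum sum_nonneg) (auto intro: order.trans[OF _ gsum])
      finally show "sum (\<lambda>mn. 1 / norm (lp mn) ^ 3) F \<le> 8 / cc ^ 3 * (S * S)" .
    qed
  qed simp
  thus ?thesis unfolding Lam0_eq
    by (subst summable_on_reindex) (auto simp: o_def intro: inj_on_subset[OF inj_lp])
qed

end


lemma uniform_limit_infsum:
  fixes f :: "'a \<Rightarrow> 'b \<Rightarrow> 'c::banach" and M :: "'a \<Rightarrow> real"
  assumes M: "M summable_on A" and Mpos: "\<And>w. w \<in> A \<Longrightarrow> M w \<ge> 0"
      and bound: "\<And>w z. w \<in> A \<Longrightarrow> z \<in> S \<Longrightarrow> norm (f w z) \<le> M w"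
  shows "uniform_limit S (\<lambda>F z. \<Sum>w\<in>F. f w z) (\<lambda>z. \<Sum>\<^sub>\<infinity>w\<in>A. f w z) (finite_subsets_at_top A)"
proof (rule uniform_limitI)
  fix e :: real assume e: "e > 0"
  have "(sum M \<longlongrightarrow> infsum M A) (finite_subsets_at_top A)"
    using M by (simp add: summable_iff_has_sum_infsum has_sum_def)
  hence "eventually (\<lambda>F. dist (sum M F) (infsum M A) < e) (finite_subsets_at_top A)"
    using e tendstoD by blast
  moreover have "eventually (\<lambda>F. finite F \<and> F \<subseteq> A) (finite_subsets_at_top A)"
    by (rule eventually_finite_subsets_at_top_weakI) auto
  ultimately show "eventually (\<lambda>F. \<forall>z\<in>S. dist (\<Sum>w\<in>F. f w z) (\<Sum>\<^sub>\<infinity>w\<in>A. f w z) < e) (finite_subsets_at_top A)"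
  proof eventually_elim
    case (elim F)
    hence F: "finite F" "F \<subseteq> A" and dM: "dist (sum M F) (infsum M A) < e" by auto
    have MabsA: "(\<lambda>w. norm (M w)) summable_on A"
      using M by (rule summable_on_cong[THEN iffD1, rotated]) (use Mpos in auto)
    have MD: "M summable_on (A - F)" using M by (rule summable_on_subset_banach) auto
    have eqM: "infsum M A = sum M F + infsum M (A - F)"
    proof -
      have "infsum M A = infsum M (F \<union> (A - F))" using F by (simp add: Un_absorb1)
      also have "\<dots> = infsum M F + infsum M (A - F)"
        by (rule infsum_Un_disjoint) (use F MD in auto)
      finally show ?thesis using F by simp
    qed
    show ?case
    proof
      fix z assume z: "z \<in> S"
      have absf: "(\<lambda>w. norm (f w z)) summable_on A"
        by (rule Infinite_Sum.abs_summable_on_comparison_test'[OF M]) (use bound z in auto)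
      have sf: "(\<lambda>w. f w z) summable_on A" using absf by (rule abs_summable_summable)
      have sfD: "(\<lambda>w. f w z) summable_on (A - F)" using sf by (rule summable_on_subset_banach) auto
      have absfD: "(\<lambda>w. norm (f w z)) summable_on (A - F)" using absf by (rule summable_on_subset_banach) auto
      have eq1: "infsum (\<lambda>w. f w z) A = (\<Sum>w\<in>F. f w z) + infsum (\<lambda>w. f w z) (A - F)"
      proof -
        have "infsum (\<lambda>w. f w z) A = infsum (\<lambda>w. f w z) (F \<union> (A - F))" using F by (simp add: Un_absorb1)
        also have "\<dots> = infsum (\<lambda>w. f w z) F + infsum (\<lambda>w. f w z) (A - F)"
          by (rule infsum_Un_disjoint) (use F sfD in auto)
        finally show ?thesis using F by simp
      qed
      have "dist (\<Sum>w\<in>F. f w z) (\<Sum>\<^sub>\<infinity>w\<in>A. f w z) = norm (infsum (\<lambda>w. f w z) (A - F))"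
        unfolding eq1 by (simp add: dist_norm)
      also have "\<dots> \<le> infsum (\<lambda>w. norm (f w z)) (A - F)"
        by (rule norm_infsum_bound) (rule absfD)
      also have "\<dots> \<le> infsum M (A - F)"
        by (rule infsum_mono[OF absfD MD]) (use bound z in auto)
      also have "\<dots> = infsum M A - sum M F" using eqM by simp
      also have "\<dots> < e" using dM by (simp add: dist_real_def abs_less_iff)
      finally show "dist (\<Sum>w\<in>F. f w z) (\<Sum>\<^sub>\<infinity>w\<in>A. f w z) < e" .
    qed
  qed
qed

lemma infsum_has_field_derivative:
  fixes f f' :: "'a \<Rightarrow> complex \<Rightarrow> complex" and M :: "'a \<Rightarrow> real"
  assumes r: "r > 0" and M: "M summable_on A" and Mpos: "\<And>w. w \<in> A \<Longrightarrow> M w \<ge> 0"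
      and bound: "\<And>w z. w \<in> A \<Longrightarrow> z \<in> cball z0 r \<Longrightarrow> norm (f w z) \<le> M w"
      and deriv: "\<And>w z. w \<in> A \<Longrightarrow> z \<in> ball z0 r \<Longrightarrow> (f w has_field_derivative f' w z) (at z)"
      and cont: "\<And>w. w \<in> A \<Longrightarrow> continuous_on (cball z0 r) (f w)"
      and z: "z \<in> ball z0 r"
  shows "((\<lambda>z. \<Sum>\<^sub>\<infinity>w\<in>A. f w z) has_field_derivative (\<Sum>\<^sub>\<infinity>w\<in>A. f' w z)) (at z)"
        "(\<lambda>w. f' w z) summable_on A"
proof -
  have ul: "uniform_limit (cball z0 r) (\<lambda>F z. \<Sum>w\<in>F. f w z) (\<lambda>z. \<Sum>\<^sub>\<infinity>w\<in>A. f w z) (finite_subsets_at_top A)"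
    by (rule uniform_limit_infsum[OF M Mpos bound])
  have ev: "eventually (\<lambda>F. continuous_on (cball z0 r) (\<lambda>z. \<Sum>w\<in>F. f w z) \<and>
             (\<forall>u\<in>ball z0 r. ((\<lambda>z. \<Sum>w\<in>F. f w z) has_field_derivative (\<Sum>w\<in>F. f' w u)) (at u)))
             (finite_subsets_at_top A)"
  proof (rule eventually_finite_subsets_at_top_weakI)
    fix F assume F: "finite F" "F \<subseteq> A"
    show "continuous_on (cball z0 r) (\<lambda>z. \<Sum>w\<in>F. f w z) \<and>
          (\<forall>u\<in>ball z0 r. ((\<lambda>z. \<Sum>w\<in>F. f w z) has_field_derivative (\<Sum>w\<in>F. f' w u)) (at u))"
    proof (intro conjI ballI)
      show "continuous_on (cball z0 r) (\<lambda>z. \<Sum>w\<in>F. f w z)"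
        by (rule continuous_on_sum) (use F cont in auto)
      fix u assume u: "u \<in> ball z0 r"
      show "((\<lambda>z. \<Sum>w\<in>F. f w z) has_field_derivative (\<Sum>w\<in>F. f' w u)) (at u)"
        by (rule DERIV_sum) (use F deriv u in auto)
    qed
  qed
  obtain g' where g': "\<And>u. u \<in> ball z0 r \<Longrightarrow>
      ((\<lambda>z. \<Sum>\<^sub>\<infinity>w\<in>A. f w z) has_field_derivative (g' u)) (at u) \<and>
      ((\<lambda>F. \<Sum>w\<in>F. f' w u) \<longlongrightarrow> g' u) (finite_subsets_at_top A)"
    using has_complex_derivative_uniform_limit[OF ev ul finite_subsets_at_top_neq_bot r] by blast
  have hs: "((\<lambda>w. f' w z) has_sum g' z) A" using g'[OF z] by (simp add: has_sum_def)
  thus "(\<lambda>w. f' w z) summable_on A" by (auto simp: summable_on_def)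
  have "(\<Sum>\<^sub>\<infinity>w\<in>A. f' w z) = g' z" using hs by (rule infsumI)
  thus "((\<lambda>z. \<Sum>\<^sub>\<infinity>w\<in>A. f w z) has_field_derivative (\<Sum>\<^sub>\<infinity>w\<in>A. f' w z)) (at z)"
    using g'[OF z] by simp
qed

lemma dist_lower_bound:
  fixes z w :: complex
  assumes "norm z \<le> R" "norm (z - w) \<ge> r" "r > 0" "R \<ge> 0"
  shows "norm (z - w) \<ge> r / (R + r) * norm w"
proof (cases "norm w \<le> R + r")
  case True
  have "r / (R + r) * norm w \<le> r / (R + r) * (R + r)"
    using True assms by (intro mult_left_mono) auto
  also have "\<dots> = r" using assms by simp
  finally show ?thesis using assms by linarith
next
  case False
  have "norm w - R \<le> norm (z - w)"
    using norm_triangle_ineq2[of w z] assms(1) by (simp add: norm_minus_commute)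
  moreover have "r / (R + r) * norm w \<le> norm w - R"
  proof -
    have "r * norm w \<le> (norm w - R) * (R + r)"
    proof -
      have "R * (R + r) \<le> R * norm w" using False assms by (intro mult_left_mono) auto
      thus ?thesis by (simp add: algebra_simps)
    qed
    thus ?thesis using assms by (simp add: field_simps)
  qed
  ultimately show ?thesis by linarith
qed


context lat begin

definition zt :: "complex \<Rightarrow> complex \<Rightarrow> complex" where "zt w z = 1 / (z - w) + 1 / w + z / w ^ 2"
definition pt :: "complex \<Rightarrow> complex \<Rightarrow> complex" where "pt w z = 1 / (z - w) ^ 2 - 1 / w ^ 2"
definition qt :: "complex \<Rightarrow> complex \<Rightarrow> complex" where "qt w z = 1 / (z - w) ^ 3"

lemma zt_eq: assumes "w \<noteq> 0" "z \<noteq> w" shows "zt w z = z ^ 2 / (w ^ 2 * (z - w))"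
proof -
  have d: "z - w \<noteq> 0" using assms by simp
  show ?thesis unfolding zt_def using d assms(1) by (simp add: divide_simps) (simp add: algebra_simps power2_eq_square)
qed

lemma pt_eq: assumes "w \<noteq> 0" "z \<noteq> w" shows "pt w z = z * (2 * w - z) / (w ^ 2 * (z - w) ^ 2)"
proof -
  have d: "z - w \<noteq> 0" using assms by simp
  show ?thesis unfolding pt_def using d assms(1) by (simp add: divide_simps) (simp add: algebra_simps power2_eq_square)
qed

lemma Lam_norm_ge: "w \<in> Lam \<Longrightarrow> w \<noteq> 0 \<Longrightarrow> norm w \<ge> cc"
proof -
  assume "w \<in> Lam" "w \<noteq> 0"
  then obtain m n where w: "w = lp (m, n)" and mn: "(m, n) \<noteq> (0, 0)"
    unfolding Lam_range using lp_zero_iff by (metis surj_pair rangeE)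
  have "real_of_int \<bar>m\<bar> + real_of_int \<bar>n\<bar> \<ge> 1" using mn by (cases "m = 0") auto
  hence "cc * 1 \<le> cc * (real_of_int \<bar>m\<bar> + real_of_int \<bar>n\<bar>)" using cc_pos by (intro mult_left_mono) auto
  thus ?thesis using lp_lower[of m n] w by simp
qed

lemma local_bounds:
  assumes B: "B \<subseteq> Lam - {0}" and r: "r > 0" and far: "\<And>w. w \<in> B \<Longrightarrow> 2 * r \<le> dist z0 w"
  obtains K where "K \<ge> 0"
    "\<And>w z. w \<in> B \<Longrightarrow> z \<in> cball z0 r \<Longrightarrow> norm (zt w z) \<le> K / norm w ^ 3"
    "\<And>w z. w \<in> B \<Longrightarrow> z \<in> cball z0 r \<Longrightarrow> norm (pt w z) \<le> K / norm w ^ 3"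
    "\<And>w z. w \<in> B \<Longrightarrow> z \<in> cball z0 r \<Longrightarrow> norm (qt w z) \<le> K / norm w ^ 3"
proof -
  define R where "R = norm z0 + r"
  define c where "c = r / (R + r)"
  have nz0: "norm z0 \<ge> 0" by simp
  have R: "R \<ge> 0" "R > 0" using nz0 r unfolding R_def by linarith+
  have c: "c > 0" using r R by (simp add: c_def)
  define K1 where "K1 = R ^ 2 / c"
  define K2 where "K2 = R * (2 + R / cc) / c ^ 2"
  define K3 where "K3 = 1 / c ^ 3"
  have K: "K1 \<ge> 0" "K2 \<ge> 0" "K3 \<ge> 0" using R c cc_pos by (auto simp: K1_def K2_def K3_def)
  have basic: "norm z \<le> R \<and> norm (z - w) \<ge> c * norm w \<and> norm w \<ge> cc \<and> w \<noteq> 0 \<and> z \<noteq> w \<and> norm (z - w) > 0 \<and> norm w > 0"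
    if w: "w \<in> B" and z: "z \<in> cball z0 r" for w z
  proof -
    have nz: "norm z \<le> R" using z norm_triangle_ineq2[of z z0] by (auto simp: R_def dist_norm norm_minus_commute)
    have "2 * r \<le> dist z0 w" using far w by blast
    also have "\<dots> \<le> dist z0 z + dist z w" by (rule dist_triangle)
    finally have "norm (z - w) \<ge> r" using z by (auto simp: dist_norm)
    hence "norm (z - w) \<ge> c * norm w" unfolding c_def using dist_lower_bound[OF nz _ r R(1)] by blast
    moreover have "w \<noteq> 0" "w \<in> Lam" using w B by auto
    moreover have "norm w \<ge> cc" using calculation by (intro Lam_norm_ge) auto
    moreover have "z \<noteq> w" using \<open>norm (z - w) \<ge> r\<close> r by auto
    ultimately show ?thesis using nz by auto
  qed
  show ?thesis
  proof (rule that[of "K1 + K2 + K3"])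
    show "K1 + K2 + K3 \<ge> 0" using K by simp
  next
    fix w z assume w: "w \<in> B" and z: "z \<in> cball z0 r"
    note b = basic[OF w z]
    have "norm (zt w z) = norm z ^ 2 / (norm w ^ 2 * norm (z - w))"
      using b by (simp add: zt_eq norm_divide norm_mult norm_power)
    also have "\<dots> \<le> R ^ 2 / (norm w ^ 2 * (c * norm w))"
      using b c by (intro frac_le mult_left_mono power_mono mult_pos_pos) auto
    also have "\<dots> = K1 / norm w ^ 3" using b c by (simp add: K1_def field_simps power3_eq_cube power2_eq_square)
    also have "\<dots> \<le> (K1 + K2 + K3) / norm w ^ 3" using K b by (intro divide_right_mono) auto
    finally show "norm (zt w z) \<le> (K1 + K2 + K3) / norm w ^ 3" .
  next
    fix w z assume w: "w \<in> B" and z: "z \<in> cball z0 r"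
    note b = basic[OF w z]
    have n2: "norm (2 * w - z) \<le> (2 + R / cc) * norm w"
    proof -
      have "norm (2 * w - z) \<le> 2 * norm w + norm z" using norm_triangle_ineq4[of "2*w" z] by simp
      also have "norm z \<le> R / cc * norm w"
      proof -
        have "R * 1 \<le> R * (norm w / cc)" using b R cc_pos by (intro mult_left_mono) (auto simp: field_simps)
        thus ?thesis using b by (simp add: field_simps)
      qed
      finally show ?thesis by (simp add: algebra_simps)
    qed
    have "norm (pt w z) = norm z * norm (2 * w - z) / (norm w ^ 2 * norm (z - w) ^ 2)"
      using b by (simp add: pt_eq norm_divide norm_mult norm_power)
    also have "\<dots> \<le> R * ((2 + R / cc) * norm w) / (norm w ^ 2 * (c * norm w) ^ 2)"
      using b c n2 R cc_pos by (intro frac_le mult_left_mono power_mono mult_pos_pos mult_mono) auto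
    also have "\<dots> = K2 / norm w ^ 3" using b c by (simp add: K2_def field_simps power3_eq_cube power2_eq_square)
    also have "\<dots> \<le> (K1 + K2 + K3) / norm w ^ 3" using K b by (intro divide_right_mono) auto
    finally show "norm (pt w z) \<le> (K1 + K2 + K3) / norm w ^ 3" .
  next
    fix w z assume w: "w \<in> B" and z: "z \<in> cball z0 r"
    note b = basic[OF w z]
    have "norm (qt w z) = 1 / norm (z - w) ^ 3" by (simp add: qt_def norm_divide norm_power)
    also have "\<dots> \<le> 1 / (c * norm w) ^ 3"
      using b c by (intro frac_le power_mono zero_less_power mult_pos_pos) auto
    also have "\<dots> = K3 / norm w ^ 3" using b c by (simp add: K3_def field_simps)
    also have "\<dots> \<le> (K1 + K2 + K3) / norm w ^ 3" using K b by (intro divide_right_mono) auto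
    finally show "norm (qt w z) \<le> (K1 + K2 + K3) / norm w ^ 3" .
  qed
qed

lemma majorant_summable:
  assumes "B \<subseteq> Lam - {0}" shows "(\<lambda>w. K / norm w ^ 3) summable_on B"
proof -
  have "(\<lambda>w. K * (1 / norm w ^ 3)) summable_on (Lam - {0})"
    by (rule summable_on_cmult_right) (rule sum3)
  hence "(\<lambda>w. K * (1 / norm w ^ 3)) summable_on B" by (rule summable_on_subset_banach) (rule assms)
  thus ?thesis by simp
qed

end


lemma summable_bounded:
  fixes f :: "'a \<Rightarrow> 'b::banach"
  assumes "M summable_on A" "\<And>w. w \<in> A \<Longrightarrow> norm (f w) \<le> M w"
  shows "f summable_on A"
  by (rule abs_summable_summable, rule Infinite_Sum.abs_summable_on_comparison_test'[OF assms])

context lat begin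

definition zeta :: "complex \<Rightarrow> complex" where "zeta z = 1 / z + (\<Sum>\<^sub>\<infinity>w\<in>Lam - {0}. zt w z)"
definition wp :: "complex \<Rightarrow> complex" where "wp z = 1 / z ^ 2 + (\<Sum>\<^sub>\<infinity>w\<in>Lam - {0}. pt w z)"
definition wq :: "complex \<Rightarrow> complex" where "wq z = (\<Sum>\<^sub>\<infinity>w\<in>Lam. qt w z)"

lemma zeta_eq: "weierstrass_zeta t1 t2 = zeta"
  by (rule ext) (simp add: weierstrass_zeta_def zeta_def zt_def Lam_def)

lemma near:
  assumes "B \<subseteq> Lam" "z \<notin> B" shows "\<exists>r>0. \<forall>w\<in>B. 2 * r \<le> dist z w"
proof -
  obtain \<rho> where \<rho>: "\<rho> > 0" "\<forall>w\<in>Lam. w \<noteq> z \<longrightarrow> \<rho> \<le> dist z w" using Lam_avoid by blast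
  show ?thesis by (rule exI[of _ "\<rho>/2"]) (use \<rho> assms in auto)
qed

lemma zt_deriv: assumes "z \<noteq> w" "w \<noteq> 0" shows "(zt w has_field_derivative (- pt w z)) (at z)"
proof -
  have e: "w ^ 2 / w ^ 4 = 1 / w ^ 2" using assms by (simp add: divide_simps)
  have "((\<lambda>z. 1 / (z - w) + 1 / w + z / w ^ 2) has_field_derivative (- (1 / (z - w) ^ 2 - 1 / w ^ 2))) (at z)"
    using assms apply (auto intro!: derivative_eq_intros)
    using e by (simp add: power2_eq_square)
  thus ?thesis unfolding zt_def[abs_def] pt_def .
qed

lemma pt_deriv: assumes "z \<noteq> w" shows "(pt w has_field_derivative (-2 * qt w z)) (at z)"
proof -
  have d: "z - w \<noteq> 0" using assms by simp
  have e: "(2 * w - 2 * z) / (z - w) ^ 4 = - (2 / (z - w) ^ 3)"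
  proof -
    have e1: "(2 * w - 2 * z) = (-2) * (z - w)" by (simp add: algebra_simps)
    have e2: "(z - w) ^ 4 = (z - w) ^ 3 * (z - w)" by (simp add: eval_nat_numeral)
    show ?thesis unfolding e1 e2 using d by (simp add: field_simps)
  qed
  have "((\<lambda>z. 1 / (z - w) ^ 2 - 1 / w ^ 2) has_field_derivative (-2 * (1 / (z - w) ^ 3))) (at z)"
    using assms apply (auto intro!: derivative_eq_intros)
    using e by simp
  thus ?thesis unfolding pt_def[abs_def] qt_def .
qed

lemma zt_cont: "w \<notin> S \<Longrightarrow> w \<noteq> 0 \<Longrightarrow> continuous_on S (zt w)"
  unfolding zt_def by (intro continuous_intros) auto

lemma pt_cont: "w \<notin> S \<Longrightarrow> w \<noteq> 0 \<Longrightarrow> continuous_on S (pt w)"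
  unfolding pt_def by (intro continuous_intros) auto

lemma sums_deriv:
  assumes B: "B \<subseteq> Lam - {0}" and z: "z \<notin> B"
  shows "((\<lambda>z. \<Sum>\<^sub>\<infinity>w\<in>B. zt w z) has_field_derivative (- (\<Sum>\<^sub>\<infinity>w\<in>B. pt w z))) (at z)"
        "((\<lambda>z. \<Sum>\<^sub>\<infinity>w\<in>B. pt w z) has_field_derivative (-2 * (\<Sum>\<^sub>\<infinity>w\<in>B. qt w z))) (at z)"
        "(\<lambda>w. zt w z) summable_on B" "(\<lambda>w. pt w z) summable_on B" "(\<lambda>w. qt w z) summable_on B"
proof -
  obtain r where r: "r > 0" "\<forall>w\<in>B. 2 * r \<le> dist z w" using near[of B z] B z by auto
  obtain K where K: "K \<ge> 0"
    "\<And>w u. w \<in> B \<Longrightarrow> u \<in> cball z r \<Longrightarrow> norm (zt w u) \<le> K / norm w ^ 3"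
    "\<And>w u. w \<in> B \<Longrightarrow> u \<in> cball z r \<Longrightarrow> norm (pt w u) \<le> K / norm w ^ 3"
    "\<And>w u. w \<in> B \<Longrightarrow> u \<in> cball z r \<Longrightarrow> norm (qt w u) \<le> K / norm w ^ 3"
    using local_bounds[OF B r(1), of z] r(2) by blast
  have M: "(\<lambda>w. K / norm w ^ 3) summable_on B" by (rule majorant_summable[OF B])
  have Mpos: "\<And>w. w \<in> B \<Longrightarrow> K / norm w ^ 3 \<ge> 0" using K(1) by simp
  have notin: "w \<notin> cball z r" if "w \<in> B" for w
    using r that by (auto simp: dist_commute)
  have zin: "z \<in> ball z r" using r by simp
  show "(\<lambda>w. zt w z) summable_on B" by (rule summable_bounded[OF M]) (use K(2) r in auto)
  show "(\<lambda>w. pt w z) summable_on B" by (rule summable_bounded[OF M]) (use K(3) r in auto)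
  show "(\<lambda>w. qt w z) summable_on B" by (rule summable_bounded[OF M]) (use K(4) r in auto)
  have "((\<lambda>z. \<Sum>\<^sub>\<infinity>w\<in>B. zt w z) has_field_derivative (\<Sum>\<^sub>\<infinity>w\<in>B. - pt w z)) (at z)"
  proof (rule infsum_has_field_derivative(1)[OF r(1) M Mpos])
    show "norm (zt w u) \<le> K / norm w ^ 3" if "w \<in> B" "u \<in> cball z r" for w u using K(2) that .
    show "(zt w has_field_derivative - pt w u) (at u)" if "w \<in> B" "u \<in> ball z r" for w u
      by (rule zt_deriv) (use notin[OF that(1)] that B in auto)
    show "continuous_on (cball z r) (zt w)" if "w \<in> B" for w by (rule zt_cont) (use notin[OF that(1)] that B in auto)
  qed (use zin in auto)
  thus "((\<lambda>z. \<Sum>\<^sub>\<infinity>w\<in>B. zt w z) has_field_derivative (- (\<Sum>\<^sub>\<infinity>w\<in>B. pt w z))) (at z)"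
    by (simp add: infsum_uminus)
  have "((\<lambda>z. \<Sum>\<^sub>\<infinity>w\<in>B. pt w z) has_field_derivative (\<Sum>\<^sub>\<infinity>w\<in>B. -2 * qt w z)) (at z)"
  proof (rule infsum_has_field_derivative(1)[OF r(1) M Mpos])
    show "norm (pt w u) \<le> K / norm w ^ 3" if "w \<in> B" "u \<in> cball z r" for w u using K(3) that .
    show "(pt w has_field_derivative -2 * qt w u) (at u)" if "w \<in> B" "u \<in> ball z r" for w u
      by (rule pt_deriv) (use notin[OF that(1)] that in auto)
    show "continuous_on (cball z r) (pt w)" if "w \<in> B" for w by (rule pt_cont) (use notin[OF that(1)] that B in auto)
  qed (use zin in auto)
  thus "((\<lambda>z. \<Sum>\<^sub>\<infinity>w\<in>B. pt w z) has_field_derivative (-2 * (\<Sum>\<^sub>\<infinity>w\<in>B. qt w z))) (at z)"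
    by (simp only: infsum_cmult_right'[of "-2"])
qed

lemma wq_split: assumes "z \<notin> Lam" shows "wq z = 1 / z ^ 3 + (\<Sum>\<^sub>\<infinity>w\<in>Lam - {0}. qt w z)"
proof -
  have s: "(\<lambda>w. qt w z) summable_on (Lam - {0})" using sums_deriv(5)[of "Lam - {0}" z] assms by auto
  have "((\<lambda>w. qt w z) has_sum (qt 0 z + (\<Sum>\<^sub>\<infinity>w\<in>Lam - {0}. qt w z))) (insert 0 (Lam - {0}))"
    by (rule has_sum_insert) (use s in auto)
  moreover have "insert 0 (Lam - {0}) = Lam" by auto
  ultimately show ?thesis unfolding wq_def by (simp add: infsumI qt_def)
qed

lemma zeta_deriv: assumes "z \<notin> Lam" shows "(zeta has_field_derivative (- wp z)) (at z)"
proof -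
  have z0: "z \<noteq> 0" using assms by auto
  have "((\<lambda>z. 1 / z + (\<Sum>\<^sub>\<infinity>w\<in>Lam - {0}. zt w z)) has_field_derivative
          (- 1 / z ^ 2 + - (\<Sum>\<^sub>\<infinity>w\<in>Lam - {0}. pt w z))) (at z)"
    by (rule derivative_intros, (rule derivative_eq_intros | simp add: z0 power2_eq_square)+,
        rule sums_deriv(1)) (use assms in auto)
  thus ?thesis unfolding zeta_def[abs_def] wp_def by (simp add: algebra_simps)
qed

lemma wp_deriv: assumes "z \<notin> Lam" shows "(wp has_field_derivative (-2 * wq z)) (at z)"
proof -
  have z0: "z \<noteq> 0" using assms by auto
  have e: "2 * z / z ^ 4 = 2 / z ^ 3"
  proof -
    have e2: "z ^ 4 = z ^ 3 * z" by (simp add: eval_nat_numeral)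
    show ?thesis unfolding e2 using z0 by simp
  qed
  have d1: "((\<lambda>z. 1 / z ^ 2) has_field_derivative (- 2 / z ^ 3)) (at z)"
    using z0 apply (auto intro!: derivative_eq_intros)
    using e by simp
  have d2: "((\<lambda>z. \<Sum>\<^sub>\<infinity>w\<in>Lam - {0}. pt w z) has_field_derivative (-2 * (\<Sum>\<^sub>\<infinity>w\<in>Lam - {0}. qt w z))) (at z)"
    by (rule sums_deriv(2)) (use assms in auto)
  have "((\<lambda>z. 1 / z ^ 2 + (\<Sum>\<^sub>\<infinity>w\<in>Lam - {0}. pt w z)) has_field_derivative
          (- 2 / z ^ 3 + -2 * (\<Sum>\<^sub>\<infinity>w\<in>Lam - {0}. qt w z))) (at z)"
    by (rule DERIV_add[OF d1 d2])
  thus ?thesis unfolding wp_def[abs_def] wq_split[OF assms] by (simp add: algebra_simps)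
qed

end


context lat begin

lemma bij_shift: assumes "t \<in> Lam" shows "bij_betw (\<lambda>v. v + t) Lam Lam"
proof (rule bij_betw_imageI)
  show "inj_on (\<lambda>v. v + t) Lam" by (auto simp: inj_on_def)
  show "(\<lambda>v. v + t) ` Lam = Lam"
  proof
    show "(\<lambda>v. v + t) ` Lam \<subseteq> Lam" using Lam_add assms by auto
    show "Lam \<subseteq> (\<lambda>v. v + t) ` Lam"
    proof
      fix w assume "w \<in> Lam"
      hence "w - t \<in> Lam" using Lam_diff assms by auto
      thus "w \<in> (\<lambda>v. v + t) ` Lam" by (rule rev_image_eqI) simp
    qed
  qed
qed

lemma bij_neg: "bij_betw uminus (Lam - {0}) (Lam - {0})"
proof (rule bij_betw_imageI)
  show "inj_on uminus (Lam - {0})" by (auto simp: inj_on_def)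
  show "uminus ` (Lam - {0}) = Lam - {0}"
  proof
    show "uminus ` (Lam - {0}) \<subseteq> Lam - {0}" using Lam_uminus by auto
    show "Lam - {0} \<subseteq> uminus ` (Lam - {0})"
    proof
      fix w assume "w \<in> Lam - {0}"
      hence "- w \<in> Lam - {0}" using Lam_uminus by auto
      thus "w \<in> uminus ` (Lam - {0})" by (rule rev_image_eqI) simp
    qed
  qed
qed

lemma wq_periodic: assumes "t \<in> Lam" shows "wq (z + t) = wq z"
proof -
  have "wq (z + t) = (\<Sum>\<^sub>\<infinity>v\<in>Lam. qt (v + t) (z + t))"
    unfolding wq_def by (rule infsum_reindex_bij_betw[OF bij_shift[OF assms], symmetric])
  also have "\<dots> = wq z" unfolding wq_def qt_def by simp
  finally show ?thesis .
qed

lemma wp_even: "wp (- z) = wp z"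
proof -
  have "(\<Sum>\<^sub>\<infinity>w\<in>Lam - {0}. pt w (- z)) = (\<Sum>\<^sub>\<infinity>v\<in>Lam - {0}. pt (- v) (- z))"
    by (rule infsum_reindex_bij_betw[OF bij_neg, symmetric])
  also have "\<dots> = (\<Sum>\<^sub>\<infinity>v\<in>Lam - {0}. pt v z)"
  proof (rule infsum_cong)
    fix v show "pt (- v) (- z) = pt v z"
    proof -
      have "(- z - - v) ^ 2 = (z - v) ^ 2" by (simp add: power2_eq_square algebra_simps)
      thus ?thesis unfolding pt_def by simp
    qed
  qed
  finally show ?thesis unfolding wp_def by simp
qed

lemma zeta_odd: "zeta (- z) = - zeta z"
proof -
  have "(\<Sum>\<^sub>\<infinity>w\<in>Lam - {0}. zt w (- z)) = (\<Sum>\<^sub>\<infinity>v\<in>Lam - {0}. zt (- v) (- z))"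
    by (rule infsum_reindex_bij_betw[OF bij_neg, symmetric])
  also have "\<dots> = (\<Sum>\<^sub>\<infinity>v\<in>Lam - {0}. - zt v z)"
  proof (rule infsum_cong)
    fix v show "zt (- v) (- z) = - zt v z"
    proof -
      have "1 / (- z - - v) = - (1 / (z - v))"
        by (cases "z = v") (simp_all add: field_simps)
      thus ?thesis unfolding zt_def by simp
    qed
  qed
  also have "\<dots> = - (\<Sum>\<^sub>\<infinity>v\<in>Lam - {0}. zt v z)" by (rule infsum_uminus)
  finally show ?thesis unfolding zeta_def by simp
qed

lemma U_props: "open (- Lam)" "connected (- Lam)"
proof -
  show "open (- Lam)" using Lam_closed by (simp add: open_Compl)
  have "connected (UNIV - Lam)"
    by (rule connected_open_diff_countable) (auto simp: Lam_countable)
  thus "connected (- Lam)" by (simp add: Compl_eq_Diff_UNIV)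
qed

lemma const_on_U:
  assumes "\<And>x. x \<notin> Lam \<Longrightarrow> (h has_field_derivative 0) (at x)"
  shows "\<exists>c. \<forall>x. x \<notin> Lam \<longrightarrow> h x = c"
proof -
  have cont: "continuous_on (- Lam) h"
    by (rule continuous_at_imp_continuous_on) (use assms DERIV_isCont in blast)
  obtain c where "\<And>x. x \<in> - Lam \<Longrightarrow> h x = c"
    by (rule DERIV_zero_connected_constant[OF U_props(2) U_props(1) finite.emptyI cont])
       (use assms in auto)
  thus ?thesis by auto
qed

lemma wp_periodic:
  assumes t: "t \<in> Lam" "t / 2 \<notin> Lam" and z: "z \<notin> Lam"
  shows "wp (z + t) = wp z"
proof -
  have dz: "((\<lambda>x. wp (x + t) - wp x) has_field_derivative 0) (at x)" if x: "x \<notin> Lam" for x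
  proof -
    have xt: "x + t \<notin> Lam" using Lam_shift[OF t(1)] x by auto
    have "((\<lambda>x. wp (x + t)) has_field_derivative (-2 * wq (x + t))) (at x)"
      using wp_deriv[OF xt] by (simp add: DERIV_shift)
    from DERIV_diff[OF this wp_deriv[OF x]] show ?thesis by (simp add: wq_periodic[OF t(1)])
  qed
  obtain c where c: "\<And>x. x \<notin> Lam \<Longrightarrow> wp (x + t) - wp x = c" using const_on_U[OF dz] by blast
  have m: "- (t / 2) \<notin> Lam" using t(2) Lam_uminus_iff by simp
  have "c = wp (- (t / 2) + t) - wp (- (t / 2))" using c[OF m] by simp
  also have "- (t / 2) + t = t / 2" by simp
  also have "wp (t / 2) - wp (- (t / 2)) = 0" by (simp add: wp_even)
  finally show ?thesis using c[OF z] by simp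
qed

lemma zeta_quasi:
  assumes t: "t \<in> Lam" "t / 2 \<notin> Lam" and z: "z \<notin> Lam"
  shows "zeta (z + t) = zeta z + 2 * zeta (t / 2)"
proof -
  have dz: "((\<lambda>x. zeta (x + t) - zeta x) has_field_derivative 0) (at x)" if x: "x \<notin> Lam" for x
  proof -
    have xt: "x + t \<notin> Lam" using Lam_shift[OF t(1)] x by auto
    have "((\<lambda>x. zeta (x + t)) has_field_derivative (- wp (x + t))) (at x)"
      using zeta_deriv[OF xt] by (simp add: DERIV_shift)
    from DERIV_diff[OF this zeta_deriv[OF x]] show ?thesis by (simp add: wp_periodic[OF t x])
  qed
  obtain c where c: "\<And>x. x \<notin> Lam \<Longrightarrow> zeta (x + t) - zeta x = c" using const_on_U[OF dz] by blast
  have m: "- (t / 2) \<notin> Lam" using t(2) Lam_uminus_iff by simp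
  have "c = zeta (- (t / 2) + t) - zeta (- (t / 2))" using c[OF m] by simp
  also have "- (t / 2) + t = t / 2" by simp
  also have "zeta (t / 2) - zeta (- (t / 2)) = 2 * zeta (t / 2)" by (simp add: zeta_odd)
  finally show ?thesis using c[OF z] by (simp add: algebra_simps)
qed

end


lemma tri_join:
  assumes "continuous_on (closed_segment a b) f" "continuous_on (closed_segment b c) f"
          "continuous_on (closed_segment c a) f"
  shows "contour_integral (linepath a b +++ linepath b c +++ linepath c a) f =
         contour_integral (linepath a b) f + contour_integral (linepath b c) f + contour_integral (linepath c a) f"
proof -
  have i1: "f contour_integrable_on linepath a b" using assms(1) by (rule contour_integrable_continuous_linepath)
  have i2: "f contour_integrable_on linepath b c" using assms(2) by (rule contour_integrable_continuous_linepath)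
  have i3: "f contour_integrable_on linepath c a" using assms(3) by (rule contour_integrable_continuous_linepath)
  have i23: "f contour_integrable_on (linepath b c +++ linepath c a)"
    by (rule contour_integrable_joinI[OF i2 i3]) auto
  have v23: "valid_path (linepath b c +++ linepath c a)" by (rule valid_path_join) auto
  have "contour_integral (linepath a b +++ linepath b c +++ linepath c a) f =
        contour_integral (linepath a b) f + contour_integral (linepath b c +++ linepath c a) f"
    by (rule contour_integral_join[OF i1 i23]) (use v23 in auto)
  also have "contour_integral (linepath b c +++ linepath c a) f =
             contour_integral (linepath b c) f + contour_integral (linepath c a) f"
    by (rule contour_integral_join[OF i2 i3]) auto
  finally show ?thesis by (simp add: add.assoc)
qed

lemma tri_cauchy:
  assumes "f holomorphic_on convex hull {a, b, c}"
  shows "contour_integral (linepath a b) f + contour_integral (linepath b c) f + contour_integral (linepath c a) f = 0"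
proof -
  have cont: "continuous_on (convex hull {a, b, c}) f" using assms by (rule holomorphic_on_imp_continuous_on)
  have hin: "a \<in> convex hull {a,b,c}" "b \<in> convex hull {a,b,c}" "c \<in> convex hull {a,b,c}"
    by (auto intro: hull_inc)
  have seg: "closed_segment a b \<subseteq> convex hull {a,b,c}" "closed_segment b c \<subseteq> convex hull {a,b,c}"
            "closed_segment c a \<subseteq> convex hull {a,b,c}"
    using hin by (meson closed_segment_subset_convex_hull)+
  have "contour_integral (linepath a b +++ linepath b c +++ linepath c a) f = 0"
    by (rule contour_integral_unique[OF Cauchy_theorem_triangle[OF assms]])
  moreover have "contour_integral (linepath a b +++ linepath b c +++ linepath c a) f =
         contour_integral (linepath a b) f + contour_integral (linepath b c) f + contour_integral (linepath c a) f"
    by (rule tri_join) (use seg in \<open>auto intro: continuous_on_subset[OF cont]\<close>)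
  ultimately show ?thesis by simp
qed

lemma tri_wind:
  assumes z: "0 \<in> interior (convex hull {a, b, c})"
  shows "contour_integral (linepath a b) (\<lambda>z. 1 / z) + contour_integral (linepath b c) (\<lambda>z. 1 / z) +
         contour_integral (linepath c a) (\<lambda>z. 1 / z) \<noteq> 0"
proof -
  have notin: "0 \<notin> closed_segment a b" "0 \<notin> closed_segment b c" "0 \<notin> closed_segment c a"
    using z interior_of_triangle[of a b c] by auto
  let ?g = "linepath a b +++ linepath b c +++ linepath c a"
  have vp: "valid_path ?g" by (intro valid_path_join) auto
  have pi: "0 \<notin> path_image ?g"
    using notin by (auto simp: path_image_join)
  have "winding_number ?g 0 = 1/(2*pi*\<i>) * contour_integral ?g (\<lambda>w. 1/(w - 0))"
    by (rule winding_number_valid_path[OF vp pi])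
  also have "contour_integral ?g (\<lambda>w. 1/(w - 0)) =
     contour_integral (linepath a b) (\<lambda>z. 1 / z) + contour_integral (linepath b c) (\<lambda>z. 1 / z) +
         contour_integral (linepath c a) (\<lambda>z. 1 / z)"
    by simp (rule tri_join; intro continuous_intros; use notin in auto)
  finally have w: "winding_number ?g 0 = 1/(2*pi*\<i>) * (contour_integral (linepath a b) (\<lambda>z. 1 / z) + contour_integral (linepath b c) (\<lambda>z. 1 / z) +
         contour_integral (linepath c a) (\<lambda>z. 1 / z))" .
  have "winding_number ?g 0 \<noteq> 0" using winding_number_triangle[OF z] by simp
  thus ?thesis using w by auto
qed

lemma ci_shift:
  "contour_integral (linepath (a + t) (b + t)) f = contour_integral (linepath a b) (\<lambda>z. f (z + t))"
proof -
  have "linepath (a + t) (b + t) x = linepath a b x + t" for x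
    by (simp add: linepath_def scaleR_conv_of_real algebra_simps)
  thus ?thesis unfolding contour_integral_integral by simp
qed

lemma holo_from_deriv:
  fixes f :: "complex \<Rightarrow> complex"
  assumes "\<And>x. x \<in> S \<Longrightarrow> (f has_field_derivative f' x) (at x)"
  shows "f holomorphic_on S"
  unfolding holomorphic_on_def field_differentiable_def
  using assms has_field_derivative_at_within by blast

lemma cont_from_deriv:
  fixes f :: "complex \<Rightarrow> complex"
  assumes "\<And>x. x \<in> S \<Longrightarrow> (f has_field_derivative f' x) (at x)"
  shows "continuous_on S f"
  by (rule holomorphic_on_imp_continuous_on, rule holo_from_deriv[OF assms])


context lat begin

definition P :: "real \<Rightarrow> real \<Rightarrow> complex" where "P x y = of_real x * t1 + of_real y * t2"

lemma P_Lam: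
  assumes "P x y \<in> Lam" "-1/3 \<le> x" "x \<le> 2/3" "-1/4 \<le> y" "y \<le> 3/4"
  shows "x = 0 \<and> y = 0"
proof -
  obtain m n :: int where "P x y = of_int m * t1 + of_int n * t2"
    using assms(1) unfolding Lam_def lattice2_def by auto
  hence "of_real x * t1 + of_real y * t2 = of_real (of_int m) * t1 + of_real (of_int n) * t2"
    by (simp add: P_def)
  from indep_eq[OF this] have xm: "x = of_int m" and yn: "y = of_int n" by auto
  have "real_of_int m < 1" "real_of_int m > -1" using assms xm by linarith+
  hence "m < 1" "m > -1" by simp_all
  hence "m = 0" by simp
  have "real_of_int n < 1" "real_of_int n > -1" using assms yn by linarith+
  hence "n < 1" "n > -1" by simp_all
  hence "n = 0" by simp
  show ?thesis using xm yn \<open>m = 0\<close> \<open>n = 0\<close> by simp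
qed

lemma P_zero: "P x y = 0 \<Longrightarrow> x = 0 \<and> y = 0"
  using indep[of x y] by (simp add: P_def)

lemma seg_P:
  assumes "z \<in> closed_segment (P x1 y1) (P x2 y2)"
  obtains u where "0 \<le> u" "u \<le> 1" "z = P (x1 + u * (x2 - x1)) (y1 + u * (y2 - y1))"
proof -
  from assms obtain u where u: "0 \<le> u" "u \<le> 1" "z = (1 - u) *\<^sub>R P x1 y1 + u *\<^sub>R P x2 y2"
    unfolding closed_segment_def by auto
  have "z = P (x1 + u * (x2 - x1)) (y1 + u * (y2 - y1))"
    unfolding u(3) P_def by (simp add: scaleR_conv_of_real algebra_simps)
  thus ?thesis using that u by blast
qed

lemma hull_P:
  assumes "z \<in> convex hull {P x1 y1, P x2 y2, P x3 y3}"
  obtains u v w where "0 \<le> u" "0 \<le> v" "0 \<le> w" "u + v + w = 1"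
    "z = P (u * x1 + v * x2 + w * x3) (u * y1 + v * y2 + w * y3)"
proof -
  from assms obtain u v w where uvw: "0 \<le> u" "0 \<le> v" "0 \<le> w" "u + v + w = 1"
    "z = u *\<^sub>R P x1 y1 + v *\<^sub>R P x2 y2 + w *\<^sub>R P x3 y3"
    unfolding convex_hull_3 by auto
  have "z = P (u * x1 + v * x2 + w * x3) (u * y1 + v * y2 + w * y3)"
    unfolding uvw(5) P_def by (simp add: scaleR_conv_of_real algebra_simps)
  thus ?thesis using that uvw by blast
qed

definition inbox :: "real \<Rightarrow> real \<Rightarrow> bool" where
  "inbox x y \<longleftrightarrow> -1/3 \<le> x \<and> x \<le> 2/3 \<and> -1/4 \<le> y \<and> y \<le> 3/4"

lemma seg_avoid:
  assumes "\<And>u. 0 \<le> u \<Longrightarrow> u \<le> 1 \<Longrightarrow> inbox (x1 + u * (x2 - x1)) (y1 + u * (y2 - y1)) \<and>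
              \<not> (x1 + u * (x2 - x1) = 0 \<and> y1 + u * (y2 - y1) = 0)"
  shows "closed_segment (P x1 y1) (P x2 y2) \<inter> Lam = {}"
proof (rule ccontr)
  assume "closed_segment (P x1 y1) (P x2 y2) \<inter> Lam \<noteq> {}"
  then obtain z where z: "z \<in> closed_segment (P x1 y1) (P x2 y2)" "z \<in> Lam" by blast
  from z(1) obtain u where u: "0 \<le> u" "u \<le> 1" "z = P (x1 + u * (x2 - x1)) (y1 + u * (y2 - y1))"
    by (rule seg_P)
  from assms[OF u(1,2)] P_Lam[of "x1 + u * (x2 - x1)" "y1 + u * (y2 - y1)"] z(2) u(3)
  show False by (auto simp: inbox_def)
qed

lemma seg_no0:
  assumes "\<And>u. 0 \<le> u \<Longrightarrow> u \<le> 1 \<Longrightarrow> \<not> (x1 + u * (x2 - x1) = 0 \<and> y1 + u * (y2 - y1) = 0)"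
  shows "0 \<notin> closed_segment (P x1 y1) (P x2 y2)"
proof
  assume "0 \<in> closed_segment (P x1 y1) (P x2 y2)"
  then obtain u where u: "0 \<le> u" "u \<le> 1" "0 = P (x1 + u * (x2 - x1)) (y1 + u * (y2 - y1))"
    by (rule seg_P)
  from assms[OF u(1,2)] P_zero[OF u(3)[symmetric]] show False by blast
qed

lemma hull_avoid:
  assumes "\<And>u v w. 0 \<le> u \<Longrightarrow> 0 \<le> v \<Longrightarrow> 0 \<le> w \<Longrightarrow> u + v + w = 1 \<Longrightarrow>
             inbox (u * x1 + v * x2 + w * x3) (u * y1 + v * y2 + w * y3)"
  shows "convex hull {P x1 y1, P x2 y2, P x3 y3} \<inter> (Lam - {0}) = {}"
proof (rule ccontr)
  assume "convex hull {P x1 y1, P x2 y2, P x3 y3} \<inter> (Lam - {0}) \<noteq> {}"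
  then obtain z where z: "z \<in> convex hull {P x1 y1, P x2 y2, P x3 y3}" "z \<in> Lam" "z \<noteq> 0" by blast
  from z(1) obtain u v w where uvw: "0 \<le> u" "0 \<le> v" "0 \<le> w" "u + v + w = 1"
    "z = P (u * x1 + v * x2 + w * x3) (u * y1 + v * y2 + w * y3)" by (rule hull_P)
  from assms[OF uvw(1-4)] P_Lam[of "u * x1 + v * x2 + w * x3" "u * y1 + v * y2 + w * y3"] z(2,3) uvw(5)
  show False by (auto simp: inbox_def P_def)
qed

lemma hull_no0:
  assumes "\<And>u v w. 0 \<le> u \<Longrightarrow> 0 \<le> v \<Longrightarrow> 0 \<le> w \<Longrightarrow> u + v + w = 1 \<Longrightarrow>
             \<not> (u * x1 + v * x2 + w * x3 = 0 \<and> u * y1 + v * y2 + w * y3 = 0)"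
  shows "0 \<notin> convex hull {P x1 y1, P x2 y2, P x3 y3}"
proof
  assume "0 \<in> convex hull {P x1 y1, P x2 y2, P x3 y3}"
  then obtain u v w where uvw: "0 \<le> u" "0 \<le> v" "0 \<le> w" "u + v + w = 1"
    "0 = P (u * x1 + v * x2 + w * x3) (u * y1 + v * y2 + w * y3)" by (rule hull_P)
  from assms[OF uvw(1-4)] P_zero[OF uvw(5)[symmetric]] show False by blast
qed

definition pA where "pA = P (-1/3) (-1/4)"
definition pB where "pB = pA + t1"
definition pC where "pC = pA + t1 + t2"
definition pD where "pD = pA + t2"

lemma coords: "pA = P (-1/3) (-1/4)" "pB = P (2/3) (-1/4)" "pC = P (2/3) (3/4)" "pD = P (-1/3) (3/4)"
  by (simp_all add: pA_def pB_def pC_def pD_def P_def algebra_simps)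

lemma side_AB: "closed_segment pA pB \<inter> Lam = {}"
  unfolding coords by (rule seg_avoid) (auto simp: inbox_def)

lemma side_BC: "closed_segment pB pC \<inter> Lam = {}"
  unfolding coords by (rule seg_avoid) (auto simp: inbox_def)

lemma side_CD: "closed_segment pC pD \<inter> Lam = {}"
  unfolding coords by (rule seg_avoid) (auto simp: inbox_def)

lemma side_DA: "closed_segment pD pA \<inter> Lam = {}"
  unfolding coords by (rule seg_avoid) (auto simp: inbox_def)

lemma side_CA: "closed_segment pC pA \<inter> Lam = {}"
  unfolding coords by (rule seg_avoid) (auto simp: inbox_def)

lemma hull1: "convex hull {pA, pB, pC} \<inter> (Lam - {0}) = {}"
  unfolding coords by (rule hull_avoid) (auto simp: inbox_def)

lemma hull2: "convex hull {pA, pC, pD} \<inter> (Lam - {0}) = {}"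
  unfolding coords by (rule hull_avoid) (auto simp: inbox_def)

lemma hull2_no0: "0 \<notin> convex hull {pA, pC, pD}"
  unfolding coords by (rule hull_no0) auto

lemma zero_interior: "0 \<in> interior (convex hull {pA, pB, pC})"
proof -
  have "0 \<in> convex hull {pA, pB, pC}"
    unfolding convex_hull_3
    by (rule CollectI, rule exI[of _ "2/3"], rule exI[of _ "1/12"], rule exI[of _ "1/4"])
       (simp add: coords P_def scaleR_conv_of_real algebra_simps)
  moreover have "0 \<notin> closed_segment pA pB" unfolding coords by (rule seg_no0) auto
  moreover have "0 \<notin> closed_segment pB pC" unfolding coords by (rule seg_no0) auto
  moreover have "0 \<notin> closed_segment pC pA" unfolding coords by (rule seg_no0) auto
  ultimately show ?thesis by (simp add: interior_of_triangle)
qed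

end


context lat begin

lemma legendre: "t2 * zeta (t1 / 2) - t1 * zeta (t2 / 2) \<noteq> 0"
proof -
  define h where "h = (\<lambda>z. \<Sum>\<^sub>\<infinity>w\<in>Lam - {0}. zt w z)"
  define inv where "inv = (\<lambda>z::complex. 1 / z)"
  define e1 where "e1 = 2 * zeta (t1 / 2)"
  define e2 where "e2 = 2 * zeta (t2 / 2)"
  have zsplit: "zeta z = inv z + h z" for z by (simp add: zeta_def h_def inv_def)
  have zsplit': "zeta = (\<lambda>z. inv z + h z)" by (rule ext) (rule zsplit)
  have zeta_cont: "continuous_on S zeta" if "S \<inter> Lam = {}" for S
    by (rule cont_from_deriv[of _ _ "\<lambda>z. - wp z"]) (use zeta_deriv that in blast)
  have h_holo: "h holomorphic_on S" if "S \<inter> (Lam - {0}) = {}" for S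
    by (rule holo_from_deriv[of _ _ "\<lambda>z. - (\<Sum>\<^sub>\<infinity>w\<in>Lam - {0}. pt w z)"])
       (use sums_deriv(1)[of "Lam - {0}"] that in \<open>auto simp: h_def\<close>)
  have h_cont: "continuous_on S h" if "S \<inter> (Lam - {0}) = {}" for S
    using h_holo[OF that] by (rule holomorphic_on_imp_continuous_on)
  have inv_cont: "continuous_on S inv" if "0 \<notin> S" for S
    unfolding inv_def by (intro continuous_intros) (use that in auto)
  have AC: "closed_segment pA pC \<inter> Lam = {}" using side_CA by (simp add: closed_segment_commute)
  have no0: "0 \<notin> closed_segment pA pB" "0 \<notin> closed_segment pB pC" "0 \<notin> closed_segment pC pD"
            "0 \<notin> closed_segment pD pA" "0 \<notin> closed_segment pA pC" "0 \<notin> closed_segment pC pA"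
    using side_AB side_BC side_CD side_DA AC side_CA by auto
  have L0: "S \<inter> (Lam - {0}) = {}" if "S \<inter> Lam = {}" for S using that by auto
  have split: "contour_integral (linepath a b) zeta =
                contour_integral (linepath a b) inv + contour_integral (linepath a b) h"
    if "closed_segment a b \<inter> Lam = {}" for a b
  proof -
    have 0: "0 \<notin> closed_segment a b" using that by auto
    have "contour_integral (linepath a b) zeta = contour_integral (linepath a b) (\<lambda>z. inv z + h z)"
      by (subst zsplit') (rule refl)
    also have "\<dots> = contour_integral (linepath a b) inv + contour_integral (linepath a b) h"
      by (rule contour_integral_add; rule contour_integrable_continuous_linepath)
         (use inv_cont[OF 0] h_cont[OF L0[OF that]] in auto)
    finally show ?thesis .
  qed
  have t1h: "contour_integral (linepath pA pB) h + contour_integral (linepath pB pC) h +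
             contour_integral (linepath pC pA) h = 0"
    by (rule tri_cauchy, rule h_holo, rule hull1)
  have t2h: "contour_integral (linepath pA pC) h + contour_integral (linepath pC pD) h +
             contour_integral (linepath pD pA) h = 0"
    by (rule tri_cauchy, rule h_holo, rule hull2)
  have revh: "contour_integral (linepath pC pA) h = - contour_integral (linepath pA pC) h"
    by (rule contour_integral_reverse_linepath, rule h_cont, rule L0, rule side_CA)
  have Sh: "contour_integral (linepath pA pB) h + contour_integral (linepath pB pC) h +
            contour_integral (linepath pC pD) h + contour_integral (linepath pD pA) h = 0"
    using t1h t2h revh by (simp add: algebra_simps)
  have t1i: "contour_integral (linepath pA pB) inv + contour_integral (linepath pB pC) inv +
             contour_integral (linepath pC pA) inv \<noteq> 0"
    unfolding inv_def by (rule tri_wind, rule zero_interior)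
  have t2i: "contour_integral (linepath pA pC) inv + contour_integral (linepath pC pD) inv +
             contour_integral (linepath pD pA) inv = 0"
    by (rule tri_cauchy) (unfold inv_def, intro holomorphic_intros, use hull2_no0 in auto)
  have revi: "contour_integral (linepath pC pA) inv = - contour_integral (linepath pA pC) inv"
    by (rule contour_integral_reverse_linepath, rule inv_cont, rule no0(6))
  have Si: "contour_integral (linepath pA pB) inv + contour_integral (linepath pB pC) inv +
            contour_integral (linepath pC pD) inv + contour_integral (linepath pD pA) inv \<noteq> 0"
  proof -
    have eqS: "contour_integral (linepath pA pB) inv + contour_integral (linepath pB pC) inv +
            contour_integral (linepath pC pD) inv + contour_integral (linepath pD pA) inv =
          (contour_integral (linepath pA pB) inv + contour_integral (linepath pB pC) inv +
             contour_integral (linepath pC pA) inv) +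
          (contour_integral (linepath pA pC) inv + contour_integral (linepath pC pD) inv +
             contour_integral (linepath pD pA) inv)"
      using revi by (simp add: algebra_simps)
    show ?thesis unfolding eqS t2i add_0_right by (rule t1i)
  qed
  have q1: "zeta (z + t1) = zeta z + e1" if "z \<notin> Lam" for z
    unfolding e1_def by (rule zeta_quasi[OF Lam_t1 half_notin(1) that])
  have q2: "zeta (z + t2) = zeta z + e2" if "z \<notin> Lam" for z
    unfolding e2_def by (rule zeta_quasi[OF Lam_t2 half_notin(2) that])
  have int_zeta: "zeta contour_integrable_on linepath a b" if "closed_segment a b \<inter> Lam = {}" for a b
    by (rule contour_integrable_continuous_linepath, rule zeta_cont, rule that)
  have DC: "contour_integral (linepath pD pC) zeta = contour_integral (linepath pA pB) zeta + e2 * t1"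
  proof -
    have "contour_integral (linepath pD pC) zeta = contour_integral (linepath (pA + t2) (pB + t2)) zeta"
      by (simp add: pB_def pC_def pD_def algebra_simps)
    also have "\<dots> = contour_integral (linepath pA pB) (\<lambda>z. zeta (z + t2))" by (rule ci_shift)
    also have "\<dots> = contour_integral (linepath pA pB) (\<lambda>z. zeta z + e2)"
      by (rule contour_integral_cong) (use q2 side_AB in auto)
    also have "\<dots> = contour_integral (linepath pA pB) zeta + contour_integral (linepath pA pB) (\<lambda>z. e2)"
      by (rule contour_integral_add) (use int_zeta[OF side_AB] in \<open>auto intro: contour_integrable_continuous_linepath\<close>)
    also have "\<dots> = contour_integral (linepath pA pB) zeta + e2 * t1" by (simp add: pB_def)
    finally show ?thesis .
  qed
  have BC: "contour_integral (linepath pB pC) zeta = contour_integral (linepath pA pD) zeta + e1 * t2"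
  proof -
    have "contour_integral (linepath pB pC) zeta = contour_integral (linepath (pA + t1) (pD + t1)) zeta"
      by (simp add: pB_def pC_def pD_def algebra_simps)
    also have "\<dots> = contour_integral (linepath pA pD) (\<lambda>z. zeta (z + t1))" by (rule ci_shift)
    also have "\<dots> = contour_integral (linepath pA pD) (\<lambda>z. zeta z + e1)"
      by (rule contour_integral_cong) (use q1 side_DA in \<open>auto simp: closed_segment_commute\<close>)
    also have "\<dots> = contour_integral (linepath pA pD) zeta + contour_integral (linepath pA pD) (\<lambda>z. e1)"
      by (rule contour_integral_add)
         (use int_zeta side_DA in \<open>auto intro: contour_integrable_continuous_linepath simp: closed_segment_commute\<close>)
    also have "\<dots> = contour_integral (linepath pA pD) zeta + e1 * t2" by (simp add: pD_def)
    finally show ?thesis .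
  qed
  have revCD: "contour_integral (linepath pC pD) zeta = - contour_integral (linepath pD pC) zeta"
    by (rule contour_integral_reverse_linepath, rule zeta_cont, rule side_CD)
  have revDA: "contour_integral (linepath pD pA) zeta = - contour_integral (linepath pA pD) zeta"
    by (rule contour_integral_reverse_linepath, rule zeta_cont, rule side_DA)
  have Sz: "contour_integral (linepath pA pB) zeta + contour_integral (linepath pB pC) zeta +
            contour_integral (linepath pC pD) zeta + contour_integral (linepath pD pA) zeta = e1 * t2 - e2 * t1"
    using DC BC revCD revDA by (simp add: algebra_simps)
  have "contour_integral (linepath pA pB) zeta + contour_integral (linepath pB pC) zeta +
            contour_integral (linepath pC pD) zeta + contour_integral (linepath pD pA) zeta =
        (contour_integral (linepath pA pB) inv + contour_integral (linepath pB pC) inv +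
            contour_integral (linepath pC pD) inv + contour_integral (linepath pD pA) inv) +
        (contour_integral (linepath pA pB) h + contour_integral (linepath pB pC) h +
            contour_integral (linepath pC pD) h + contour_integral (linepath pD pA) h)"
    using split[OF side_AB] split[OF side_BC] split[OF side_CD] split[OF side_DA] by (simp add: algebra_simps)
  hence "e1 * t2 - e2 * t1 \<noteq> 0" using Sz Sh Si by simp
  thus ?thesis unfolding e1_def e2_def by (auto simp: algebra_simps)
qed

end


lemma ev_shift:
  fixes t :: complex
  assumes "\<forall>\<^sub>\<approx>z. P z" shows "\<forall>\<^sub>\<approx>z. P (z + t)"
proof -
  have all: "eventually P (at x)" for x using assms by (simp add: eventually_cosparse_open_eq)
  have "eventually (\<lambda>z. P (z + t)) (at x)" for x
  proof -
    have "at (x + t) = filtermap (\<lambda>z. z + t) (at x)" using filtermap_at_shift[of "-t" x] by simp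
    thus ?thesis using all[of "x + t"] by (simp add: eventually_filtermap)
  qed
  thus ?thesis by (simp add: eventually_cosparse_open_eq)
qed

lemma ev_exists:
  assumes "\<forall>\<^sub>\<approx>z::complex. P z" shows "\<exists>z. P z"
  by (rule eventually_happens'[OF _ assms]) simp

context lat begin

lemma local_form:
  assumes w0: "w0 \<in> Lam"
  shows "\<exists>r>0. \<exists>G. G holomorphic_on ball w0 r \<and> (\<forall>z\<in>ball w0 r. z \<noteq> w0 \<longrightarrow> zeta z = 1 / (z - w0) + G z)"
proof -
  obtain r where r: "r > 0" "\<forall>w\<in>Lam. w \<noteq> w0 \<longrightarrow> r \<le> dist w0 w" using Lam_avoid by blast
  have ballLam: "z \<in> Lam \<Longrightarrow> z \<in> ball w0 r \<Longrightarrow> z = w0" for z using r by (auto simp: dist_commute)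
  show ?thesis
  proof (cases "w0 = 0")
    case True
    define G where "G = (\<lambda>z. \<Sum>\<^sub>\<infinity>w\<in>Lam - {0}. zt w z)"
    have "G holomorphic_on ball w0 r"
      by (rule holo_from_deriv[of _ _ "\<lambda>z. - (\<Sum>\<^sub>\<infinity>w\<in>Lam - {0}. pt w z)"])
         (use sums_deriv(1)[of "Lam - {0}"] ballLam True in \<open>auto simp: G_def\<close>)
    moreover have "\<forall>z\<in>ball w0 r. z \<noteq> w0 \<longrightarrow> zeta z = 1 / (z - w0) + G z"
      using True by (simp add: zeta_def G_def)
    ultimately show ?thesis using r by blast
  next
    case False
    define B where "B = Lam - {0} - {w0}"
    have B: "B \<subseteq> Lam - {0}" unfolding B_def by auto
    define G where "G = (\<lambda>z. 1 / z + 1 / w0 + z / w0 ^ 2 + (\<Sum>\<^sub>\<infinity>w\<in>B. zt w z))"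
    have noB: "z \<notin> B" if "z \<in> ball w0 r" for z using ballLam[of z] that by (auto simp: B_def)
    have no0: "z \<noteq> 0" if "z \<in> ball w0 r" for z using ballLam[of 0] that False by auto
    have "(\<lambda>z. \<Sum>\<^sub>\<infinity>w\<in>B. zt w z) holomorphic_on ball w0 r"
      by (rule holo_from_deriv[of _ _ "\<lambda>z. - (\<Sum>\<^sub>\<infinity>w\<in>B. pt w z)"])
         (use sums_deriv(1)[OF B] noB in auto)
    hence "G holomorphic_on ball w0 r"
      unfolding G_def by (intro holomorphic_intros) (use no0 False in auto)
    moreover have "zeta z = 1 / (z - w0) + G z" if z: "z \<in> ball w0 r" "z \<noteq> w0" for z
    proof -
      have s: "(\<lambda>w. zt w z) summable_on B" by (rule sums_deriv(3)[OF B noB[OF z(1)]])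
      have "((\<lambda>w. zt w z) has_sum (zt w0 z + (\<Sum>\<^sub>\<infinity>w\<in>B. zt w z))) (insert w0 B)"
        by (rule has_sum_insert) (use s in \<open>auto simp: B_def\<close>)
      moreover have "insert w0 B = Lam - {0}" using w0 False by (auto simp: B_def)
      ultimately have "(\<Sum>\<^sub>\<infinity>w\<in>Lam - {0}. zt w z) = zt w0 z + (\<Sum>\<^sub>\<infinity>w\<in>B. zt w z)"
        by (simp add: infsumI)
      thus ?thesis by (simp add: zeta_def G_def zt_def algebra_simps)
    qed
    ultimately show ?thesis using r by blast
  qed
qed

lemma zeta_mero: "zeta meromorphic_on UNIV"
proof (subst meromorphic_on_meromorphic_at, intro ballI)
  fix x :: complex
  show "zeta meromorphic_on {x}"
  proof (cases "x \<in> Lam")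
    case False
    obtain r where r: "r > 0" "cball x r \<inter> Lam = {}" using cball_avoid[OF False] by blast
    have "zeta holomorphic_on ball x r"
      by (rule holo_from_deriv[of _ _ "\<lambda>z. - wp z"]) (use zeta_deriv r in force)
    hence "zeta analytic_on {x}" using r(1) analytic_at_ball by blast
    thus ?thesis by (rule analytic_on_imp_meromorphic_on)
  next
    case True
    obtain r G where rG: "r > 0" "G holomorphic_on ball x r"
      "\<And>z. z \<in> ball x r \<Longrightarrow> z \<noteq> x \<Longrightarrow> zeta z = 1 / (z - x) + G z"
      using local_form[OF True] by blast
    have "G analytic_on ball x r" using rG(2) by (simp add: analytic_on_open)
    hence "G meromorphic_on ball x r" by (rule analytic_on_imp_meromorphic_on)
    hence "(\<lambda>z. 1 / (z - x) + G z) meromorphic_on ball x r" by (intro meromorphic_intros) auto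
    hence m: "(\<lambda>z. 1 / (z - x) + G z) meromorphic_on {x}" by (rule meromorphic_on_subset) (use rG(1) in auto)
    have ev: "eventually (\<lambda>z. zeta z = 1 / (z - x) + G z) (at x)"
      unfolding eventually_at using rG by (auto intro!: exI[of _ r] simp: dist_commute)
    show ?thesis
      by (subst meromorphic_on_cong[of "{x}" zeta "\<lambda>z. 1 / (z - x) + G z" "{x}"]) (use ev m in auto)
  qed
qed

end


theorem proposition2p4:
  shows
  "(\<forall>f t1. f meromorphic_on UNIV \<and> t1 \<noteq> 0 \<and> pseudoperiodic_wrt f (lattice1 t1) \<longrightarrow>
      (\<exists>a \<phi>. \<phi> meromorphic_on UNIV \<and> has_period \<phi> t1 \<and>
          (\<forall>\<^sub>\<approx>z. f z = a * z + \<phi> z) \<and>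
          (\<forall>\<^sub>\<approx>z. f (z + t1) = f z + a * t1) \<and>
          (\<forall>a' \<phi>'. \<phi>' meromorphic_on UNIV \<and> has_period \<phi>' t1 \<and>
               (\<forall>\<^sub>\<approx>z. f z = a' * z + \<phi>' z) \<longrightarrow>
             a' = a \<and> (\<forall>\<^sub>\<approx>z. \<phi>' z = \<phi> z))))
   \<and>
   (\<forall>f t1 t2. f meromorphic_on UNIV \<and> Im (t2 / t1) > 0 \<and>
        pseudoperiodic_wrt f (lattice2 t1 t2) \<longrightarrow>
      (\<exists>a b E. E meromorphic_on UNIV \<and> has_period E t1 \<and> has_period E t2 \<and>
          (\<forall>\<^sub>\<approx>z. f z = a * z + b * weierstrass_zeta t1 t2 z + E z) \<and>
          (\<forall>\<^sub>\<approx>z. f (z + t1) = f z + (a * t1 + 2 * b * weierstrass_zeta t1 t2 (t1 / 2))) \<and>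
          (\<forall>\<^sub>\<approx>z. f (z + t2) = f z + (a * t2 + 2 * b * weierstrass_zeta t1 t2 (t2 / 2))) \<and>
          (\<forall>a' b' E'. E' meromorphic_on UNIV \<and> has_period E' t1 \<and> has_period E' t2 \<and>
               (\<forall>\<^sub>\<approx>z. f z = a' * z + b' * weierstrass_zeta t1 t2 z + E' z) \<longrightarrow>
             a' = a \<and> b' = b \<and> (\<forall>\<^sub>\<approx>z. E' z = E z))))"
proof (rule conjI)
  show "\<forall>f t1. f meromorphic_on UNIV \<and> t1 \<noteq> 0 \<and> pseudoperiodic_wrt f (lattice1 t1) \<longrightarrow>
      (\<exists>a \<phi>. \<phi> meromorphic_on UNIV \<and> has_period \<phi> t1 \<and>
          (\<forall>\<^sub>\<approx>z. f z = a * z + \<phi> z) \<and>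
          (\<forall>\<^sub>\<approx>z. f (z + t1) = f z + a * t1) \<and>
          (\<forall>a' \<phi>'. \<phi>' meromorphic_on UNIV \<and> has_period \<phi>' t1 \<and>
               (\<forall>\<^sub>\<approx>z. f z = a' * z + \<phi>' z) \<longrightarrow>
             a' = a \<and> (\<forall>\<^sub>\<approx>z. \<phi>' z = \<phi> z)))"
  proof (intro allI impI)
    fix f :: "complex \<Rightarrow> complex" and t1 :: complex
    assume H: "f meromorphic_on UNIV \<and> t1 \<noteq> 0 \<and> pseudoperiodic_wrt f (lattice1 t1)"
    hence fm: "f meromorphic_on UNIV" and t1nz: "t1 \<noteq> 0" and pp: "pseudoperiodic_wrt f (lattice1 t1)"
      by auto
    have "t1 = of_int 1 * t1" by simp
    hence t1L: "t1 \<in> lattice1 t1" unfolding lattice1_def by blast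
    obtain eta where eta: "\<forall>\<^sub>\<approx>z. f (z + t1) = f z + eta"
      using pp t1L unfolding pseudoperiodic_wrt_def by blast
    define a where "a = eta / t1"
    have at: "eta = a * t1" using t1nz by (simp add: a_def)
    define \<phi> where "\<phi> = (\<lambda>z. f z - a * z)"
    show "\<exists>a \<phi>. \<phi> meromorphic_on UNIV \<and> has_period \<phi> t1 \<and>
          (\<forall>\<^sub>\<approx>z. f z = a * z + \<phi> z) \<and>
          (\<forall>\<^sub>\<approx>z. f (z + t1) = f z + a * t1) \<and>
          (\<forall>a' \<phi>'. \<phi>' meromorphic_on UNIV \<and> has_period \<phi>' t1 \<and>
               (\<forall>\<^sub>\<approx>z. f z = a' * z + \<phi>' z) \<longrightarrow>
             a' = a \<and> (\<forall>\<^sub>\<approx>z. \<phi>' z = \<phi> z))"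
    proof (intro exI[of _ a] exI[of _ \<phi>] conjI allI impI)
      show "\<phi> meromorphic_on UNIV" unfolding \<phi>_def by (intro meromorphic_intros fm)
      show "has_period \<phi> t1" unfolding has_period_def \<phi>_def
        using eta by eventually_elim (simp add: at algebra_simps)
      show "\<forall>\<^sub>\<approx>z. f z = a * z + \<phi> z" by (rule always_eventually) (simp add: \<phi>_def)
      show "\<forall>\<^sub>\<approx>z. f (z + t1) = f z + a * t1" using eta by (simp add: at)
    next
      fix a' \<phi>'
      assume H': "\<phi>' meromorphic_on UNIV \<and> has_period \<phi>' t1 \<and> (\<forall>\<^sub>\<approx>z. f z = a' * z + \<phi>' z)"
      have e1: "\<forall>\<^sub>\<approx>z. f z = a' * z + \<phi>' z" using H' by blast
      have e2: "\<forall>\<^sub>\<approx>z. f (z + t1) = a' * (z + t1) + \<phi>' (z + t1)"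
        using ev_shift[OF e1, of t1] by simp
      have e3: "\<forall>\<^sub>\<approx>z. \<phi>' (z + t1) = \<phi>' z" using H' unfolding has_period_def by blast
      have "\<forall>\<^sub>\<approx>z. f z = a' * z + \<phi>' z \<and> f (z + t1) = a' * (z + t1) + \<phi>' (z + t1) \<and>
                \<phi>' (z + t1) = \<phi>' z \<and> f (z + t1) = f z + eta"
        using e1 e2 e3 eta by eventually_elim blast
      then obtain z where z: "f z = a' * z + \<phi>' z" "f (z + t1) = a' * (z + t1) + \<phi>' (z + t1)"
                "\<phi>' (z + t1) = \<phi>' z" "f (z + t1) = f z + eta"
        using ev_exists by blast
      have "a' * t1 = eta" using z by (simp add: algebra_simps)
      thus "a' = a" using t1nz by (simp add: a_def field_simps)
      show "\<forall>\<^sub>\<approx>z. \<phi>' z = \<phi> z"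
        using e1 by eventually_elim (simp add: \<phi>_def \<open>a' = a\<close>)
    qed
  qed
next
  show "\<forall>f t1 t2. f meromorphic_on UNIV \<and> Im (t2 / t1) > 0 \<and>
        pseudoperiodic_wrt f (lattice2 t1 t2) \<longrightarrow>
      (\<exists>a b E. E meromorphic_on UNIV \<and> has_period E t1 \<and> has_period E t2 \<and>
          (\<forall>\<^sub>\<approx>z. f z = a * z + b * weierstrass_zeta t1 t2 z + E z) \<and>
          (\<forall>\<^sub>\<approx>z. f (z + t1) = f z + (a * t1 + 2 * b * weierstrass_zeta t1 t2 (t1 / 2))) \<and>
          (\<forall>\<^sub>\<approx>z. f (z + t2) = f z + (a * t2 + 2 * b * weierstrass_zeta t1 t2 (t2 / 2))) \<and>
          (\<forall>a' b' E'. E' meromorphic_on UNIV \<and> has_period E' t1 \<and> has_period E' t2 \<and>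
               (\<forall>\<^sub>\<approx>z. f z = a' * z + b' * weierstrass_zeta t1 t2 z + E' z) \<longrightarrow>
             a' = a \<and> b' = b \<and> (\<forall>\<^sub>\<approx>z. E' z = E z)))"
  proof (intro allI impI)
    fix f :: "complex \<Rightarrow> complex" and t1 t2 :: complex
    assume H: "f meromorphic_on UNIV \<and> Im (t2 / t1) > 0 \<and> pseudoperiodic_wrt f (lattice2 t1 t2)"
    hence fm: "f meromorphic_on UNIV" and im: "Im (t2 / t1) > 0" and pp: "pseudoperiodic_wrt f (lattice2 t1 t2)"
      by auto
    interpret L: lat t1 t2 by unfold_locales (rule im)
    have LL: "lattice2 t1 t2 = L.Lam" by (simp add: L.Lam_def)
    obtain e1 where e1: "\<forall>\<^sub>\<approx>z. f (z + t1) = f z + e1"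
      using pp L.Lam_t1 unfolding pseudoperiodic_wrt_def LL by blast
    obtain e2 where e2: "\<forall>\<^sub>\<approx>z. f (z + t2) = f z + e2"
      using pp L.Lam_t2 unfolding pseudoperiodic_wrt_def LL by blast
    define Z where "Z = L.zeta"
    have ZZ: "weierstrass_zeta t1 t2 = Z" unfolding Z_def by (rule L.zeta_eq)
    define h1 where "h1 = 2 * Z (t1 / 2)"
    define h2 where "h2 = 2 * Z (t2 / 2)"
    have q1: "Z (z + t1) = Z z + h1" if "z \<notin> L.Lam" for z
      unfolding Z_def h1_def by (rule L.zeta_quasi[OF L.Lam_t1 L.half_notin(1) that])
    have q2: "Z (z + t2) = Z z + h2" if "z \<notin> L.Lam" for z
      unfolding Z_def h2_def by (rule L.zeta_quasi[OF L.Lam_t2 L.half_notin(2) that])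
    define det where "det = t1 * h2 - t2 * h1"
    have det: "det \<noteq> 0"
    proof
      assume "det = 0"
      hence "2 * (t2 * Z (t1 / 2) - t1 * Z (t2 / 2)) = 0"
        unfolding det_def h1_def h2_def by (simp add: algebra_simps)
      thus False using L.legendre unfolding Z_def by simp
    qed
    have uniq: "x = 0 \<and> y = 0" if "x * t1 + y * h1 = 0" "x * t2 + y * h2 = 0" for x y
    proof -
      have "x * det = h2 * (x * t1 + y * h1) - h1 * (x * t2 + y * h2)"
        unfolding det_def by (simp add: algebra_simps)
      hence "x * det = 0" using that by simp
      moreover have "y * det = t1 * (x * t2 + y * h2) - t2 * (x * t1 + y * h1)"
        unfolding det_def by (simp add: algebra_simps)
      hence "y * det = 0" using that by simp
      ultimately show ?thesis using det by simp
    qed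
    define a where "a = (e1 * h2 - e2 * h1) / det"
    define b where "b = (t1 * e2 - t2 * e1) / det"
    have ad: "a * det = e1 * h2 - e2 * h1" using det by (simp add: a_def)
    have bd: "b * det = t1 * e2 - t2 * e1" using det by (simp add: b_def)
    have sol1: "e1 = a * t1 + b * h1"
    proof -
      have "(a * t1 + b * h1) * det = t1 * (a * det) + h1 * (b * det)" by (simp add: algebra_simps)
      also have "\<dots> = e1 * det" unfolding ad bd by (simp add: det_def algebra_simps)
      finally show ?thesis using det by simp
    qed
    have sol2: "e2 = a * t2 + b * h2"
    proof -
      have "(a * t2 + b * h2) * det = t2 * (a * det) + h2 * (b * det)" by (simp add: algebra_simps)
      also have "\<dots> = e2 * det" unfolding ad bd by (simp add: det_def algebra_simps)
      finally show ?thesis using det by simp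
    qed
    define E where "E = (\<lambda>z. f z - a * z - b * Z z)"
    have nL: "\<forall>\<^sub>\<approx>z. z \<notin> L.Lam" by (rule L.ev_notin_Lam)
    show "\<exists>a b E. E meromorphic_on UNIV \<and> has_period E t1 \<and> has_period E t2 \<and>
          (\<forall>\<^sub>\<approx>z. f z = a * z + b * weierstrass_zeta t1 t2 z + E z) \<and>
          (\<forall>\<^sub>\<approx>z. f (z + t1) = f z + (a * t1 + 2 * b * weierstrass_zeta t1 t2 (t1 / 2))) \<and>
          (\<forall>\<^sub>\<approx>z. f (z + t2) = f z + (a * t2 + 2 * b * weierstrass_zeta t1 t2 (t2 / 2))) \<and>
          (\<forall>a' b' E'. E' meromorphic_on UNIV \<and> has_period E' t1 \<and> has_period E' t2 \<and>
               (\<forall>\<^sub>\<approx>z. f z = a' * z + b' * weierstrass_zeta t1 t2 z + E' z) \<longrightarrow>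
             a' = a \<and> b' = b \<and> (\<forall>\<^sub>\<approx>z. E' z = E z))"
      unfolding ZZ
    proof (rule exI[of _ a], rule exI[of _ b], rule exI[of _ E], intro conjI allI impI)
      show "E meromorphic_on UNIV" unfolding E_def Z_def by (intro meromorphic_intros fm L.zeta_mero)
      show "has_period E t1" unfolding has_period_def
        using e1 nL by eventually_elim (simp add: E_def q1 sol1 algebra_simps)
      show "has_period E t2" unfolding has_period_def
        using e2 nL by eventually_elim (simp add: E_def q2 sol2 algebra_simps)
      have "\<forall>z. f z = a * z + b * Z z + E z" by (simp add: E_def)
      thus "\<forall>\<^sub>\<approx>z. f z = a * z + b * Z z + E z" by (rule always_eventually)
      show "\<forall>\<^sub>\<approx>z. f (z + t1) = f z + (a * t1 + 2 * b * Z (t1 / 2))"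
        using e1 by eventually_elim (simp add: sol1 h1_def)
      show "\<forall>\<^sub>\<approx>z. f (z + t2) = f z + (a * t2 + 2 * b * Z (t2 / 2))"
        using e2 by eventually_elim (simp add: sol2 h2_def)
    next
      fix a' b' E'
      assume H': "E' meromorphic_on UNIV \<and> has_period E' t1 \<and> has_period E' t2 \<and>
               (\<forall>\<^sub>\<approx>z. f z = a' * z + b' * Z z + E' z)"
      have r0: "\<forall>\<^sub>\<approx>z. f z = a' * z + b' * Z z + E' z" using H' by blast
      have p1: "\<forall>\<^sub>\<approx>z. E' (z + t1) = E' z" and p2: "\<forall>\<^sub>\<approx>z. E' (z + t2) = E' z"
        using H' unfolding has_period_def by blast+
      have r1: "\<forall>\<^sub>\<approx>z. f (z + t1) = a' * (z + t1) + b' * Z (z + t1) + E' (z + t1)"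
        using ev_shift[OF r0, of t1] by simp
      have r2: "\<forall>\<^sub>\<approx>z. f (z + t2) = a' * (z + t2) + b' * Z (z + t2) + E' (z + t2)"
        using ev_shift[OF r0, of t2] by simp
      have "\<forall>\<^sub>\<approx>z. f z = a' * z + b' * Z z + E' z \<and>
                f (z + t1) = a' * (z + t1) + b' * Z (z + t1) + E' (z + t1) \<and>
                E' (z + t1) = E' z \<and> f (z + t1) = f z + e1 \<and> z \<notin> L.Lam"
        using r0 r1 p1 e1 nL by eventually_elim blast
      then obtain z where z: "f z = a' * z + b' * Z z + E' z"
                "f (z + t1) = a' * (z + t1) + b' * Z (z + t1) + E' (z + t1)"
                "E' (z + t1) = E' z" "f (z + t1) = f z + e1" "z \<notin> L.Lam"
        using ev_exists by blast
      have i1: "(a' - a) * t1 + (b' - b) * h1 = 0"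
        using z q1[OF z(5)] by (simp add: sol1 algebra_simps)
      have "\<forall>\<^sub>\<approx>z. f z = a' * z + b' * Z z + E' z \<and>
                f (z + t2) = a' * (z + t2) + b' * Z (z + t2) + E' (z + t2) \<and>
                E' (z + t2) = E' z \<and> f (z + t2) = f z + e2 \<and> z \<notin> L.Lam"
        using r0 r2 p2 e2 nL by eventually_elim blast
      then obtain w where w: "f w = a' * w + b' * Z w + E' w"
                "f (w + t2) = a' * (w + t2) + b' * Z (w + t2) + E' (w + t2)"
                "E' (w + t2) = E' w" "f (w + t2) = f w + e2" "w \<notin> L.Lam"
        using ev_exists by blast
      have i2: "(a' - a) * t2 + (b' - b) * h2 = 0"
        using w q2[OF w(5)] by (simp add: sol2 algebra_simps)
      from uniq[OF i1 i2] have ab: "a' = a" "b' = b" by simp_all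
      thus "a' = a" "b' = b" by simp_all
      show "\<forall>\<^sub>\<approx>z. E' z = E z"
        using r0 by eventually_elim (simp add: E_def ab)
    qed
  qed
qed

end
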